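(* Let $\mathcal{T}_0$ be the caterpillar tree with $n\ge 3$ leaves labelled $1,\dots,n$ in order along its spine, and let $P_{\mathcal{T}_0}$ be as in the context. The minimal generators of $P_{\mathcal{T}_0}$ are exactly the elements $w_{i,j,k}$, $1\le i<j<k\le n$, where $w_{i,j,k}$ is the minimal generator of $P_{\mathcal{T}_0}$ whose support is the subtree spanned by the leaves $i,j,k$. Moreover, the kernel $I_{\mathcal{T}_0}$ of the surjection $\mathbb{C}[w_{i,j,k}: i<j<k]\to\mathbb{C}[P_{\mathcal{T}_0}]$ equals the ideal $J_{3,n}$ generated by all binomials $w_{i,j,k}w_{r,s,t}-w_{(i,j,k)\wedge(r,s,t)}\,w_{(i,j,k)\vee(r,s,t)}$, where $(i,j,k)\wedge(r,s,t)=(\min(i,r),\min(j,s),\min(k,t))$ and $(i,j,k)\vee(r,s,t)=(\max(i,r),\max(j,s),\max(k,t))$.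
   Context: A Berenstein–Zelevinsky (BZ) triangle for $sl_3(\mathbb{C})$ is a $9$-tuple of nonnegative integers $(a,b,c,d,e,f,g,h,i)$ placed on the vertices of a triangular diagram with rows $a$; $b\ c$; $d\ e$; $f\ g\ h\ i$; the sides, oriented counterclockwise, read side 1 $=(a,b,d,f)$, side 2 $=(f,g,h,i)$, side 3 $=(i,e,c,a)$; the entries satisfy $b+c=g+h$, $c+e=d+g$, $e+h=b+d$. The boundary weight of a side $(x_1,x_2,x_3,x_4)$ is $(x_1+x_2)\omega_1+(x_3+x_4)\omega_2$ ($\omega_1,\omega_2$ the fundamental weights of $sl_3(\mathbb{C})$), identified with $(x_1+x_2,x_3+x_4)$. For a tree $\mathcal{T}$ whose non-leaf vertices have degree $3$ and leaves labelled $1,\dots,n$, attach a BZ triangle to each non-leaf vertex with a fixed bijection between its sides (counterclockwise) and the incident edges. $Q_{\mathcal{T}}(sl_3(\mathbb{C}))$ is the semigroup (entrywise addition) of such assignments such that for each edge joining non-leaf vertices $v,v'$, if $v$'s side on it has boundary weight $(p,q)$ then $v'$'s side on it has $(q,p)$; $\pi_{\mathcal{T}}(w)$ records at each leaf the boundary weight on its leaf edge; the support of $w$ is the set of edges with nonzero boundary weight. $P_{\mathcal{T}}$ is the subsemigroup of $w$ with every component of $\pi_{\mathcal{T}}(w)$ a nonnegative multiple of $\omega_1$. The caterpillar tree $\mathcal{T}_0$ has non-leaf vertices $v_1,\dots,v_{n-2}$ forming a path (the spine), with leaves $1,2$ attached to $v_1$, leaf $i$ attached to $v_{i-1}$ for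 $3\le i\le n-2$, and leaves $n-1,n$ attached to $v_{n-2}$. *)

theory Defs
  imports Complex_Main "HOL-Library.Multiset" "HOL-Library.Poly_Mapping"
begin

text \<open>An assignment w gives, for every non-leaf vertex v_m (m in 1..n-2) of the
caterpillar, a BZ triangle (a,b,c,d,e,f,g,h,i) stored as w m 0 = a, w m 1 = b,
w m 2 = c, w m 3 = d, w m 4 = e, w m 5 = f, w m 6 = g, w m 7 = h, w m 8 = i.\<close>

type_synonym asg = "nat \<Rightarrow> nat \<Rightarrow> nat"

definition zero_asg :: asg where "zero_asg = (\<lambda>m p. 0)"
definition add_asg :: "asg \<Rightarrow> asg \<Rightarrow> asg" where
  "add_asg u v = (\<lambda>m p. u m p + v m p)"

definition is_BZ :: "(nat \<Rightarrow> nat) \<Rightarrow> bool" where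
  "is_BZ t \<longleftrightarrow> t 1 + t 2 = t 6 + t 7 \<and> t 2 + t 4 = t 3 + t 6 \<and> t 4 + t 7 = t 1 + t 3"

text \<open>Side s (s = 1,2,3) as a 4-tuple of positions:
 side 1 = (a,b,d,f), side 2 = (f,g,h,i), side 3 = (i,e,c,a).\<close>
fun side_pos :: "nat \<Rightarrow> nat \<times> nat \<times> nat \<times> nat" where
  "side_pos s = (if s = 1 then (0,1,3,5) else if s = 2 then (5,6,7,8) else (8,4,2,0))"

text \<open>Boundary weight (x1+x2, x3+x4), identified with (x1+x2) w1 + (x3+x4) w2.\<close>
definition bweight :: "(nat \<Rightarrow> nat) \<Rightarrow> nat \<Rightarrow> nat \<times> nat" where
  "bweight t s = (case side_pos s of (p1,p2,p3,p4) \<Rightarrow> (t p1 + t p2, t p3 + t p4))"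

text \<open>Edges of the caterpillar: leaf edges and spine edges Spine m joining v_m and v_(m+1).\<close>
datatype edge = Leaf nat | Spine nat

text \<open>Fixed bijection between the sides (counterclockwise) of the triangle at v_m and
its incident edges, compatible with the planar embedding in which leaves 1,...,n
appear in counterclockwise order: v_1 has sides (leaf 1, leaf 2, spine),
v_m (middle) has (spine m-1, leaf m+1, spine m), v_(n-2) has (spine, leaf n-1, leaf n).\<close>
definition side_edge :: "nat \<Rightarrow> nat \<Rightarrow> nat \<Rightarrow> edge" where
  "side_edge n m s =
     (if s = 1 then (if m = 1 then Leaf 1 else Spine (m - 1))
      else if s = 2 then Leaf (m + 1)
      else (if m = n - 2 then Leaf n else Spine m))"

definition swap :: "nat \<times> nat \<Rightarrow> nat \<times> nat" where "swap x = (snd x, fst x)"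

definition Q_cat :: "nat \<Rightarrow> asg set" where
  "Q_cat n = {w. (\<forall>m p. (m < 1 \<or> m > n - 2 \<or> p \<ge> 9) \<longrightarrow> w m p = 0)
              \<and> (\<forall>m. 1 \<le> m \<and> m \<le> n - 2 \<longrightarrow> is_BZ (w m))
              \<and> (\<forall>m. 1 \<le> m \<and> m \<le> n - 3 \<longrightarrow> bweight (w (m + 1)) 1 = swap (bweight (w m) 3))}"

text \<open>P_T0: every leaf weight is a nonnegative multiple of omega_1.\<close>
definition P_cat :: "nat \<Rightarrow> asg set" where
  "P_cat n = {w \<in> Q_cat n. \<forall>m s l. 1 \<le> m \<and> m \<le> n - 2 \<and> s \<in> {1,2,3} \<and> side_edge n m s = Leaf l
                \<longrightarrow> snd (bweight (w m) s) = 0}"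

definition supp_asg :: "nat \<Rightarrow> asg \<Rightarrow> edge set" where
  "supp_asg n w = {e. \<exists>m s. 1 \<le> m \<and> m \<le> n - 2 \<and> s \<in> {1,2,3} \<and> side_edge n m s = e
                        \<and> bweight (w m) s \<noteq> (0,0)}"

text \<open>Non-leaf vertex to which leaf l is attached.\<close>
definition att :: "nat \<Rightarrow> nat \<Rightarrow> nat" where
  "att n l = (if l \<le> 2 then 1 else if l \<ge> n - 1 then n - 2 else l - 1)"

definition span_edges :: "nat \<Rightarrow> nat \<Rightarrow> nat \<Rightarrow> nat \<Rightarrow> edge set" where
  "span_edges n i j k = {Leaf i, Leaf j, Leaf k} \<union> {Spine m | m. att n i \<le> m \<and> m < att n k}"

definition min_gens :: "asg set \<Rightarrow> asg set" where
  "min_gens S = {w \<in> S. w \<noteq> zero_asg \<and>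
      \<not> (\<exists>u \<in> S. \<exists>v \<in> S. u \<noteq> zero_asg \<and> v \<noteq> zero_asg \<and> w = add_asg u v)}"

inductive_set add_closure :: "asg set \<Rightarrow> asg set" for G where
  zero: "zero_asg \<in> add_closure G"
| add: "g \<in> G \<Longrightarrow> x \<in> add_closure G \<Longrightarrow> add_asg g x \<in> add_closure G"

definition minimal_generating_set :: "asg set \<Rightarrow> asg set \<Rightarrow> bool" where
  "minimal_generating_set G S \<longleftrightarrow> G \<subseteq> S \<and> add_closure G = S \<and>
      (\<forall>H. H \<subset> G \<longrightarrow> add_closure H \<noteq> S)"

definition triples :: "nat \<Rightarrow> (nat \<times> nat \<times> nat) set" where
  "triples n = {(i,j,k). 1 \<le> i \<and> i < j \<and> j < k \<and> k \<le> n}"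

definition wgen :: "nat \<Rightarrow> nat \<times> nat \<times> nat \<Rightarrow> asg" where
  "wgen n t = (case t of (i,j,k) \<Rightarrow>
      THE w. w \<in> min_gens (P_cat n) \<and> supp_asg n w = span_edges n i j k)"

text \<open>Polynomials in variables indexed by triples: monomials are multisets of triples.\<close>
type_synonym cpoly = "(nat \<times> nat \<times> nat) multiset \<Rightarrow>\<^sub>0 complex"

definition Var :: "nat \<times> nat \<times> nat \<Rightarrow> cpoly" where
  "Var t = Poly_Mapping.single {#t#} 1"

definition poly_ring :: "nat \<Rightarrow> cpoly set" where
  "poly_ring n = {p. \<forall>mo \<in> Poly_Mapping.keys p. set_mset mo \<subseteq> triples n}"

text \<open>Image of a monomial in P_T0 (the exponent of the corresponding element of C[P]).\<close>
definition mono_img :: "nat \<Rightarrow> (nat \<times> nat \<times> nat) multiset \<Rightarrow> asg" where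
  "mono_img n mo = (\<lambda>m p. sum_mset (image_mset (\<lambda>t. wgen n t m p) mo))"

text \<open>Kernel I_T0 of the C-algebra map C[w_ijk] \<rightarrow> C[P_T0], w_ijk \<mapsto> chi^{w_ijk}:
 the coefficient of chi^u in the image of p is the sum of the coefficients of p
 on monomials mapping to u.\<close>
definition I_cat :: "nat \<Rightarrow> cpoly set" where
  "I_cat n = {p \<in> poly_ring n. \<forall>u. (\<Sum>mo \<in> {mo \<in> Poly_Mapping.keys p. mono_img n mo = u}. Poly_Mapping.lookup p mo) = 0}"

inductive_set ideal_gen :: "cpoly set \<Rightarrow> cpoly set \<Rightarrow> cpoly set" for A S where
  zero: "0 \<in> ideal_gen A S"
| add: "r \<in> A \<Longrightarrow> g \<in> S \<Longrightarrow> x \<in> ideal_gen A S \<Longrightarrow> r * g + x \<in> ideal_gen A S"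

fun meet3 :: "nat \<times> nat \<times> nat \<Rightarrow> nat \<times> nat \<times> nat \<Rightarrow> nat \<times> nat \<times> nat" where
  "meet3 (i,j,k) (r,s,t) = (min i r, min j s, min k t)"
fun join3 :: "nat \<times> nat \<times> nat \<Rightarrow> nat \<times> nat \<times> nat \<Rightarrow> nat \<times> nat \<times> nat" where
  "join3 (i,j,k) (r,s,t) = (max i r, max j s, max k t)"

definition J_ideal :: "nat \<Rightarrow> cpoly set" where
  "J_ideal n = ideal_gen (poly_ring n)
     {Var a * Var b - Var (meet3 a b) * Var (join3 a b) | a b. a \<in> triples n \<and> b \<in> triples n}"

end

theory Submission
  imports Defs
begin


definition tri :: "nat \<Rightarrow> nat \<Rightarrow> nat \<Rightarrow> nat \<Rightarrow> nat \<Rightarrow> nat \<Rightarrow> nat" where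
  "tri a b c d f = (\<lambda>p. if p = 0 then a else if p = 1 then b else if p = 2 then c else if p = 3 then d
     else if p = 4 then b + d else if p = 5 then f else if p = 6 then b + c else 0)"

definition Pc :: "nat \<Rightarrow> asg \<Rightarrow> bool" where
  "Pc n w \<longleftrightarrow> (\<forall>m p. (m < 1 \<or> m > n - 2 \<or> p \<ge> 9) \<longrightarrow> w m p = 0)
    \<and> (\<forall>m. 1 \<le> m \<and> m \<le> n - 2 \<longrightarrow> w m = tri (w m 0) (w m 1) (w m 2) (w m 3) (w m 5))
    \<and> w 1 3 = 0 \<and> w 1 5 = 0 \<and> w (n-2) 0 = 0 \<and> w (n-2) 2 = 0
    \<and> (\<forall>m. 1 \<le> m \<and> m \<le> n - 3 \<longrightarrow> w (m+1) 0 + w (m+1) 1 = w m 2 + w m 0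
                                    \<and> w (m+1) 3 + w (m+1) 5 = w m 1 + w m 3)"

lemma tri_apply[simp]: "tri a b c d f 0 = a" "tri a b c d f 1 = b" "tri a b c d f 2 = c"
  "tri a b c d f 3 = d" "tri a b c d f 4 = b + d" "tri a b c d f 5 = f" "tri a b c d f 6 = b + c"
  "tri a b c d f 7 = 0" "tri a b c d f 8 = 0"
  by (simp_all add: tri_def)

lemma tri_Suc0[simp]: "tri a b c d f (Suc 0) = b" by (simp add: tri_def)

lemma bweight_tri: "bweight (tri a b c d f) 1 = (a + b, d + f)"
  "bweight (tri a b c d f) 2 = (f + b + c, 0)"
  "bweight (tri a b c d f) 3 = (b + d, c + a)"
  by (simp_all add: bweight_def tri_def)

lemma is_BZ_tri: "is_BZ (tri a b c d f)"
  by (simp add: is_BZ_def tri_def)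

lemma P_char:
  assumes n: "n \<ge> 3"
  shows "w \<in> P_cat n \<longleftrightarrow> Pc n w"
proof
  assume w: "w \<in> P_cat n"
  have z: "\<forall>m p. (m < 1 \<or> m > n - 2 \<or> p \<ge> 9) \<longrightarrow> w m p = 0"
    using w by (simp add: P_cat_def Q_cat_def)
  have leaf2: "w m 7 = 0 \<and> w m 8 = 0" if "1 \<le> m" "m \<le> n-2" for m
  proof -
    have "side_edge n m 2 = Leaf (m+1)" by (simp add: side_edge_def)
    then have "snd (bweight (w m) 2) = 0" using w that by (auto simp: P_cat_def)
    then show ?thesis by (simp add: bweight_def)
  qed
  have tri: "w m = tri (w m 0) (w m 1) (w m 2) (w m 3) (w m 5)" if "1 \<le> m" "m \<le> n-2" for m
  proof
    fix p
    have bz: "is_BZ (w m)" using w that by (simp add: P_cat_def Q_cat_def)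
    show "w m p = tri (w m 0) (w m 1) (w m 2) (w m 3) (w m 5) p"
    proof (cases "p \<ge> 9")
      case True then show ?thesis using z by (simp add: tri_def)
    next
      case False
      then have "p = 0 \<or> p = 1 \<or> p = 2 \<or> p = 3 \<or> p = 4 \<or> p = 5 \<or> p = 6 \<or> p = 7 \<or> p = 8" by arith
      then show ?thesis using leaf2[OF that] bz by (auto simp: tri_def is_BZ_def)
    qed
  qed
  have l1: "w 1 3 = 0 \<and> w 1 5 = 0"
  proof -
    have "side_edge n 1 1 = Leaf 1" by (simp add: side_edge_def)
    then have "snd (bweight (w 1) 1) = 0" using w n by (auto simp: P_cat_def)
    then show ?thesis by (simp add: bweight_def)
  qed
  have l3: "w (n-2) 0 = 0 \<and> w (n-2) 2 = 0"
  proof -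
    have "side_edge n (n-2) 3 = Leaf n" using n by (simp add: side_edge_def)
    then have "snd (bweight (w (n-2)) 3) = 0" using w n by (auto simp: P_cat_def)
    then show ?thesis by (simp add: bweight_def)
  qed
  have sp: "w (m+1) 0 + w (m+1) 1 = w m 2 + w m 0 \<and> w (m+1) 3 + w (m+1) 5 = w m 1 + w m 3"
    if "1 \<le> m" "m \<le> n - 3" for m
  proof -
    have "bweight (w (m + 1)) 1 = swap (bweight (w m) 3)" using w that by (simp add: P_cat_def Q_cat_def)
    moreover have "w m 8 = 0" using leaf2[of m] that by simp
    moreover have "w m 4 = w m 1 + w m 3"
    proof -
      have "m \<le> n - 2" using that by arith
      then have "w m 4 = tri (w m 0) (w m 1) (w m 2) (w m 3) (w m 5) 4" using tri[of m] that(1) by (metis fun_cong)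
      then show ?thesis by simp
    qed
    ultimately show ?thesis by (simp add: bweight_def swap_def)
  qed
  have tri': "\<forall>m. 1 \<le> m \<and> m \<le> n - 2 \<longrightarrow> w m = tri (w m 0) (w m 1) (w m 2) (w m 3) (w m 5)"
    by (intro allI impI) (rule tri; simp)
  have sp': "\<forall>m. 1 \<le> m \<and> m \<le> n - 3 \<longrightarrow> w (m+1) 0 + w (m+1) 1 = w m 2 + w m 0
                                    \<and> w (m+1) 3 + w (m+1) 5 = w m 1 + w m 3"
    by (intro allI impI) (rule sp; simp)
  show "Pc n w" unfolding Pc_def
    apply (rule conjI, rule z)
    apply (rule conjI, rule tri')
    apply (rule conjI, rule conjunct1[OF l1])
    apply (rule conjI, rule conjunct2[OF l1])
    apply (rule conjI, rule conjunct1[OF l3])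
    apply (rule conjI, rule conjunct2[OF l3])
    by (rule sp')
next
  assume P: "Pc n w"
  have z: "\<forall>m p. (m < 1 \<or> m > n - 2 \<or> p \<ge> 9) \<longrightarrow> w m p = 0"
    using P unfolding Pc_def by (elim conjE) assumption
  have tri0: "\<forall>m. 1 \<le> m \<and> m \<le> n - 2 \<longrightarrow> w m = tri (w m 0) (w m 1) (w m 2) (w m 3) (w m 5)"
    using P unfolding Pc_def by (elim conjE) assumption
  have tri: "w m = tri (w m 0) (w m 1) (w m 2) (w m 3) (w m 5)" if "1 \<le> m" "m \<le> n - 2" for m
    using tri0[rule_format, OF conjI[OF that]] .
  have l1: "w 1 3 = 0" using P unfolding Pc_def by (elim conjE) assumption
  have l2: "w 1 5 = 0" using P unfolding Pc_def by (elim conjE) assumption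
  have l3: "w (n-2) 0 = 0" using P unfolding Pc_def by (elim conjE) assumption
  have l4: "w (n-2) 2 = 0" using P unfolding Pc_def by (elim conjE) assumption
  note l = l1 l2 l3 l4
  have sp0: "\<forall>m. 1 \<le> m \<and> m \<le> n - 3 \<longrightarrow> w (m+1) 0 + w (m+1) 1 = w m 2 + w m 0
                                    \<and> w (m+1) 3 + w (m+1) 5 = w m 1 + w m 3"
    using P unfolding Pc_def by (elim conjE) assumption
  have sp: "w (m+1) 0 + w (m+1) 1 = w m 2 + w m 0 \<and> w (m+1) 3 + w (m+1) 5 = w m 1 + w m 3"
    if "1 \<le> m" "m \<le> n - 3" for m
    using sp0[rule_format, OF conjI[OF that]] .
  have A: "w \<in> Q_cat n"
    unfolding Q_cat_def
  proof (intro CollectI conjI allI impI)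
    show "\<And>m p. m < 1 \<or> n - 2 < m \<or> 9 \<le> p \<Longrightarrow> w m p = 0" by (rule z[rule_format])
    show "is_BZ (w m)" if "1 \<le> m \<and> m \<le> n - 2" for m
    proof -
      have wm: "w m = tri (w m 0) (w m 1) (w m 2) (w m 3) (w m 5)" using tri[OF conjunct1[OF that] conjunct2[OF that]] .
      show ?thesis by (subst wm) (rule is_BZ_tri)
    qed
    show "bweight (w (m + 1)) 1 = swap (bweight (w m) 3)" if "1 \<le> m \<and> m \<le> n - 3" for m
    proof -
      have "m \<le> n - 2" using that by arith
      then have wm: "w m = tri (w m 0) (w m 1) (w m 2) (w m 3) (w m 5)"
        by (rule tri[OF conjunct1[OF that]])
      have "w m 8 = 0" "w m 4 = w m 1 + w m 3"
        using fun_cong[OF wm, of 8] fun_cong[OF wm, of 4] by simp_all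
      then show ?thesis using sp[of m] that
        by (simp add: bweight_def swap_def)
    qed
  qed
  have L: "snd (bweight (w m) s) = 0"
    if "1 \<le> m" "m \<le> n - 2" "s \<in> {1,2,3}" "side_edge n m s = Leaf l" for m s l
  proof -
    have wm: "w m = tri (w m 0) (w m 1) (w m 2) (w m 3) (w m 5)" using tri[OF that(1,2)] .
    have w78: "w m 7 = 0" "w m 8 = 0" using fun_cong[OF wm, of 7] fun_cong[OF wm, of 8] by simp_all
    have "s = 1 \<or> s = 2 \<or> s = 3" using that(3) by simp
    then consider "s = 1" | "s = 2" | "s = 3" by blast
    then show ?thesis
    proof cases
      case 1
      then have "m = 1" using that by (auto simp: side_edge_def split: if_splits)
      then show ?thesis using l 1 by (simp add: bweight_def)
    next
      case 2 then show ?thesis using w78 by (simp add: bweight_def)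
    next
      case 3
      then have "m = n - 2" using that by (auto simp: side_edge_def split: if_splits)
      then show ?thesis using l 3 by (simp add: bweight_def)
    qed
  qed
  have B: "\<forall>m s l. 1 \<le> m \<and> m \<le> n - 2 \<and> s \<in> {1,2,3} \<and> side_edge n m s = Leaf l
                \<longrightarrow> snd (bweight (w m) s) = 0"
    using L by (intro allI impI) (elim conjE; rule L; assumption)
  show "w \<in> P_cat n" unfolding P_cat_def by (simp only: mem_Collect_eq) (rule conjI[OF A B])
qed



lemma tri_ge9: "p \<ge> 9 \<Longrightarrow> tri a b c d f p = 0"
  by (simp add: tri_def)

lemma tri_eq_iff: "g = tri a b c d f \<longleftrightarrow> (\<forall>p. g p = tri a b c d f p)"
  by auto

definition Eg :: "nat \<Rightarrow> nat \<times> nat \<times> nat \<Rightarrow> asg" where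
  "Eg n t m = (case t of (i,j,k) \<Rightarrow> if 1 \<le> m \<and> m \<le> n - 2 then
     tri (of_bool (i \<le> m \<and> m+2 \<le> j)) (of_bool (i \<le> m \<and> j = m+1)) (of_bool (i = m+1))
         (of_bool (j \<le> m \<and> m+2 \<le> k)) (of_bool (j \<le> m \<and> k = m+1)) else (\<lambda>p. 0))"

lemma Eg_in: "1 \<le> m \<Longrightarrow> m \<le> n - 2 \<Longrightarrow> Eg n (i,j,k) m =
     tri (of_bool (i \<le> m \<and> m+2 \<le> j)) (of_bool (i \<le> m \<and> j = m+1)) (of_bool (i = m+1))
         (of_bool (j \<le> m \<and> m+2 \<le> k)) (of_bool (j \<le> m \<and> k = m+1))"
  by (simp add: Eg_def)

lemma Eg_out: "\<not> (1 \<le> m \<and> m \<le> n - 2) \<Longrightarrow> Eg n t m p = 0"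
  by (cases t) (auto simp: Eg_def)

lemma triples_iff: "(i,j,k) \<in> triples n \<longleftrightarrow> 1 \<le> i \<and> i < j \<and> j < k \<and> k \<le> n"
  by (simp add: triples_def)

definition sub_asg :: "asg \<Rightarrow> asg \<Rightarrow> asg" where
  "sub_asg w u = (\<lambda>m p. w m p - u m p)"

lemma Pc_tri: assumes "Pc n w" "1 \<le> m" "m \<le> n - 2" shows "w m = tri (w m 0) (w m 1) (w m 2) (w m 3) (w m 5)"
proof -
  have h: "\<forall>m. 1 \<le> m \<and> m \<le> n - 2 \<longrightarrow> w m = tri (w m 0) (w m 1) (w m 2) (w m 3) (w m 5)"
    using assms(1) unfolding Pc_def by (elim conjE) assumption
  show ?thesis by (rule h[rule_format, OF conjI[OF assms(2,3)]])
qed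

lemma Pc_ent:
  assumes "Pc n w" "1 \<le> m" "m \<le> n - 2"
  shows "w m 4 = w m 1 + w m 3" "w m 6 = w m 1 + w m 2" "w m 7 = 0" "w m 8 = 0"
  using fun_cong[OF Pc_tri[OF assms], of 4] fun_cong[OF Pc_tri[OF assms], of 6]
    fun_cong[OF Pc_tri[OF assms], of 7] fun_cong[OF Pc_tri[OF assms], of 8] by simp_all

lemma Pc_zero0: "Pc n w \<Longrightarrow> (\<forall>m p. (m < 1 \<or> m > n - 2 \<or> p \<ge> 9) \<longrightarrow> w m p = 0)"
  unfolding Pc_def by (elim conjE) assumption

lemma Pc_zero: "Pc n w \<Longrightarrow> (m < 1 \<or> m > n - 2 \<or> p \<ge> 9) \<Longrightarrow> w m p = 0"
  by (rule Pc_zero0[rule_format])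

lemma Pc_sp: "Pc n w \<Longrightarrow> 1 \<le> m \<Longrightarrow> m \<le> n - 3 \<Longrightarrow> w (m+1) 0 + w (m+1) 1 = w m 2 + w m 0"
  "Pc n w \<Longrightarrow> 1 \<le> m \<Longrightarrow> m \<le> n - 3 \<Longrightarrow> w (m+1) 3 + w (m+1) 5 = w m 1 + w m 3"
proof -
  assume "Pc n w" "1 \<le> m" "m \<le> n - 3"
  moreover have "\<forall>m. 1 \<le> m \<and> m \<le> n - 3 \<longrightarrow> w (m+1) 0 + w (m+1) 1 = w m 2 + w m 0
                                    \<and> w (m+1) 3 + w (m+1) 5 = w m 1 + w m 3" if "Pc n w"
    using that unfolding Pc_def by (elim conjE) assumption
  ultimately show "w (m+1) 0 + w (m+1) 1 = w m 2 + w m 0" by (meson conjunct1)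
next
  assume "Pc n w" "1 \<le> m" "m \<le> n - 3"
  moreover have "\<forall>m. 1 \<le> m \<and> m \<le> n - 3 \<longrightarrow> w (m+1) 0 + w (m+1) 1 = w m 2 + w m 0
                                    \<and> w (m+1) 3 + w (m+1) 5 = w m 1 + w m 3" if "Pc n w"
    using that unfolding Pc_def by (elim conjE) assumption
  ultimately show "w (m+1) 3 + w (m+1) 5 = w m 1 + w m 3" by (meson conjunct2)
qed

lemma Pc_bd: "Pc n w \<Longrightarrow> w 1 3 = 0" "Pc n w \<Longrightarrow> w 1 5 = 0" "Pc n w \<Longrightarrow> w (n-2) 0 = 0"
  "Pc n w \<Longrightarrow> w (n-2) 2 = 0"
  unfolding Pc_def by (elim conjE; assumption)+

lemma PcI:
  assumes z: "\<And>m p. (m < 1 \<or> m > n - 2 \<or> p \<ge> 9) \<Longrightarrow> w m p = 0"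
  and e: "\<And>m. 1 \<le> m \<Longrightarrow> m \<le> n - 2 \<Longrightarrow> w m 4 = w m 1 + w m 3 \<and> w m 6 = w m 1 + w m 2 \<and> w m 7 = 0 \<and> w m 8 = 0"
  and b: "w 1 3 = 0" "w 1 5 = 0" "w (n-2) 0 = 0" "w (n-2) 2 = 0"
  and s: "\<And>m. 1 \<le> m \<Longrightarrow> m \<le> n - 3 \<Longrightarrow> w (m+1) 0 + w (m+1) 1 = w m 2 + w m 0 \<and> w (m+1) 3 + w (m+1) 5 = w m 1 + w m 3"
  shows "Pc n w"
  unfolding Pc_def
proof (intro conjI allI impI)
  show "w m p = 0" if "m < 1 \<or> n - 2 < m \<or> 9 \<le> p" for m p by (rule z[OF that])
  show "w m = tri (w m 0) (w m 1) (w m 2) (w m 3) (w m 5)" if "1 \<le> m \<and> m \<le> n - 2" for m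
  proof
    fix p
    have ee: "w m 4 = w m 1 + w m 3" "w m 6 = w m 1 + w m 2" "w m 7 = 0" "w m 8 = 0"
      using e[OF conjunct1[OF that] conjunct2[OF that]] by simp_all
    show "w m p = tri (w m 0) (w m 1) (w m 2) (w m 3) (w m 5) p"
    proof (cases "p \<ge> 9")
      case True then show ?thesis using z by (simp add: tri_def)
    next
      case False
      then have "p = 0 \<or> p = 1 \<or> p = 2 \<or> p = 3 \<or> p = 4 \<or> p = 5 \<or> p = 6 \<or> p = 7 \<or> p = 8" by arith
      then show ?thesis using ee by (auto simp: tri_def)
    qed
  qed
  show "w 1 3 = 0" "w 1 5 = 0" "w (n-2) 0 = 0" "w (n-2) 2 = 0" by (rule b)+
  show "w (m+1) 0 + w (m+1) 1 = w m 2 + w m 0" "w (m+1) 3 + w (m+1) 5 = w m 1 + w m 3"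
    if "1 \<le> m \<and> m \<le> n - 3" for m using s[OF conjunct1[OF that] conjunct2[OF that]] by simp_all
qed

lemma Pc_add: assumes u: "Pc n u" and v: "Pc n v" shows "Pc n (add_asg u v)"
proof (rule PcI)
  show "add_asg u v m p = 0" if "m < 1 \<or> n - 2 < m \<or> 9 \<le> p" for m p
    using Pc_zero[OF u that] Pc_zero[OF v that] by (simp add: add_asg_def)
  show "add_asg u v m 4 = add_asg u v m 1 + add_asg u v m 3 \<and> add_asg u v m 6 = add_asg u v m 1 + add_asg u v m 2
     \<and> add_asg u v m 7 = 0 \<and> add_asg u v m 8 = 0" if "1 \<le> m" "m \<le> n - 2" for m
    using Pc_ent[OF u that] Pc_ent[OF v that] by (simp add: add_asg_def)
  show "add_asg u v 1 3 = 0" "add_asg u v 1 5 = 0" "add_asg u v (n-2) 0 = 0" "add_asg u v (n-2) 2 = 0"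
    using Pc_bd[OF u] Pc_bd[OF v] by (simp_all add: add_asg_def)
  show "add_asg u v (m+1) 0 + add_asg u v (m+1) 1 = add_asg u v m 2 + add_asg u v m 0 \<and>
        add_asg u v (m+1) 3 + add_asg u v (m+1) 5 = add_asg u v m 1 + add_asg u v m 3" if "1 \<le> m" "m \<le> n - 3" for m
    using Pc_sp[OF u that] Pc_sp[OF v that] unfolding add_asg_def by (intro conjI; arith)
qed

lemma Pc_sub:
  assumes "Pc n w" "Pc n u" "\<And>m p. u m p \<le> w m p"
  shows "Pc n (sub_asg w u)"
proof (rule PcI)
  note le = assms(3)
  show "sub_asg w u m p = 0" if "m < 1 \<or> n - 2 < m \<or> 9 \<le> p" for m p
    using that assms by (simp add: sub_asg_def Pc_zero)
  show "sub_asg w u m 4 = sub_asg w u m 1 + sub_asg w u m 3 \<and> sub_asg w u m 6 = sub_asg w u m 1 + sub_asg w u m 2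
     \<and> sub_asg w u m 7 = 0 \<and> sub_asg w u m 8 = 0" if "1 \<le> m" "m \<le> n - 2" for m
    using Pc_ent[OF assms(1) that] Pc_ent[OF assms(2) that] le[of m 1] le[of m 2] le[of m 3]
    by (simp add: sub_asg_def)
  show "sub_asg w u 1 3 = 0" "sub_asg w u 1 5 = 0" "sub_asg w u (n-2) 0 = 0" "sub_asg w u (n-2) 2 = 0"
    using Pc_bd[OF assms(1)] by (simp_all add: sub_asg_def)
  show "sub_asg w u (m+1) 0 + sub_asg w u (m+1) 1 = sub_asg w u m 2 + sub_asg w u m 0 \<and>
        sub_asg w u (m+1) 3 + sub_asg w u (m+1) 5 = sub_asg w u m 1 + sub_asg w u m 3" if "1 \<le> m" "m \<le> n - 3" for m
    using Pc_sp[OF assms(1) that] Pc_sp[OF assms(2) that] le[of "m+1" 0] le[of "m+1" 1] le[of "m+1" 3] le[of "m+1" 5]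
      le[of m 0] le[of m 1] le[of m 2] le[of m 3]
    unfolding sub_asg_def by (intro conjI; arith)
qed

lemma Eg_P:
  assumes n: "n \<ge> 3" and t: "t \<in> triples n"
  shows "Pc n (Eg n t)"
proof -
  obtain i j k where tt: "t = (i,j,k)" by (cases t)
  have ijk: "1 \<le> i" "i < j" "j < k" "k \<le> n" using t tt by (auto simp: triples_def)
  show ?thesis
  proof (rule PcI)
    fix m p :: nat assume "m < 1 \<or> n - 2 < m \<or> 9 \<le> p"
    then show "Eg n t m p = 0"
      by (cases "1 \<le> m \<and> m \<le> n - 2") (auto simp: tt Eg_in Eg_out tri_ge9)
  next
    fix m :: nat assume m: "1 \<le> m" "m \<le> n - 2"
    show "Eg n t m 4 = Eg n t m 1 + Eg n t m 3 \<and> Eg n t m 6 = Eg n t m 1 + Eg n t m 2 \<and> Eg n t m 7 = 0 \<and> Eg n t m 8 = 0"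
      using m by (simp add: tt Eg_in)
  next
    show "Eg n t 1 3 = 0" "Eg n t 1 5 = 0" using n ijk by (auto simp: tt Eg_in)
    show "Eg n t (n-2) 0 = 0" "Eg n t (n-2) 2 = 0" using n ijk by (auto simp: tt Eg_in)
  next
    fix m :: nat assume m: "1 \<le> m" "m \<le> n - 3"
    then have m1: "1 \<le> m + 1" "m + 1 \<le> n - 2" "m \<le> n - 2" by arith+
    show "Eg n t (m + 1) 0 + Eg n t (m + 1) 1 = Eg n t m 2 + Eg n t m 0 \<and>
          Eg n t (m + 1) 3 + Eg n t (m + 1) 5 = Eg n t m 1 + Eg n t m 3"
      using m m1 ijk by (simp add: tt Eg_in of_bool_def)
  qed
qed



lemma J_lem:
  assumes P: "Pc n w" and n: "n \<ge> 3"
  shows "1 \<le> m \<Longrightarrow> m \<le> n - 2 \<Longrightarrow> w m 0 + w m 1 > 0 \<Longrightarrow>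
    \<exists>j. m + 1 \<le> j \<and> j \<le> n - 1 \<and> (\<forall>m'. m \<le> m' \<and> m' + 1 < j \<longrightarrow> w m' 0 > 0) \<and> w (j - 1) 1 > 0"
proof (induction "n - 2 - m" arbitrary: m rule: less_induct)
  case less
  show ?case
  proof (cases "w m 1 > 0")
    case True
    then show ?thesis using less.prems by (intro exI[of _ "m+1"]) auto
  next
    case False
    then have a: "w m 0 > 0" using less.prems by simp
    have "m \<noteq> n - 2" using a Pc_bd(3)[OF P] by auto
    then have m3: "m \<le> n - 3" using less.prems by arith
    have pos: "w (m+1) 0 + w (m+1) 1 > 0" using Pc_sp(1)[OF P less.prems(1) m3] a by simp
    have lt: "n - 2 - (m+1) < n - 2 - m" "1 \<le> m + 1" "m + 1 \<le> n - 2" using m3 n by arith+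
    obtain j where j: "m + 1 + 1 \<le> j" "j \<le> n - 1" "\<forall>m'. m + 1 \<le> m' \<and> m' + 1 < j \<longrightarrow> w m' 0 > 0"
        "w (j - 1) 1 > 0"
      using less.hyps[OF lt pos] by blast
    show ?thesis
    proof (intro exI[of _ j] conjI allI impI)
      fix m' assume "m \<le> m' \<and> m' + 1 < j"
      then show "w m' 0 > 0" using j(3) a by (cases "m' = m") auto
    qed (use j in auto)
  qed
qed

lemma K_lem:
  assumes P: "Pc n w" and n: "n \<ge> 3"
  shows "1 \<le> m \<Longrightarrow> m \<le> n - 2 \<Longrightarrow> w m 1 + w m 3 > 0 \<Longrightarrow>
    \<exists>k. m + 2 \<le> k \<and> k \<le> n \<and> (\<forall>m'. m < m' \<and> m' + 1 < k \<longrightarrow> w m' 3 > 0) \<and> (k \<le> n - 1 \<longrightarrow> w (k - 1) 5 > 0)"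
proof (induction "n - 2 - m" arbitrary: m rule: less_induct)
  case less
  show ?case
  proof (cases "m = n - 2")
    case True
    then show ?thesis using n by (intro exI[of _ n]) auto
  next
    case False
    then have m3: "m \<le> n - 3" using less.prems by arith
    have s: "w (m+1) 3 + w (m+1) 5 > 0" using Pc_sp(2)[OF P less.prems(1) m3] less.prems(3) by simp
    show ?thesis
    proof (cases "w (m+1) 5 > 0")
      case True
      then show ?thesis using m3 n by (intro exI[of _ "m+2"]) auto
    next
      case False
      then have d: "w (m+1) 3 > 0" using s by simp
      then have pos: "w (m+1) 1 + w (m+1) 3 > 0" by simp
      have lt: "n - 2 - (m+1) < n - 2 - m" "1 \<le> m + 1" "m + 1 \<le> n - 2" using m3 n by arith+
      obtain k where k: "m + 1 + 2 \<le> k" "k \<le> n" "\<forall>m'. m + 1 < m' \<and> m' + 1 < k \<longrightarrow> w m' 3 > 0"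
        "k \<le> n - 1 \<longrightarrow> w (k - 1) 5 > 0"
        using less.hyps[OF lt pos] by blast
      show ?thesis
      proof (intro exI[of _ k] conjI allI impI)
        fix m' assume "m < m' \<and> m' + 1 < k"
        then show "w m' 3 > 0" using k(3) d by (cases "m' = m + 1") auto
      qed (use k in auto)
    qed
  qed
qed

lemma Pc_allzero:
  assumes P: "Pc n w" and n: "n \<ge> 3"
    and a1: "w 1 0 + w 1 1 = 0" and c: "\<And>m. 1 \<le> m \<Longrightarrow> m \<le> n - 2 \<Longrightarrow> w m 2 = 0"
  shows "w = zero_asg"
proof -
  have ab: "w m 0 = 0 \<and> w m 1 = 0" if "1 \<le> m" "m \<le> n - 2" for m
    using that
  proof (induction m rule: nat_induct_at_least)
    case base then show ?case using a1 by simp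
  next
    case (Suc m)
    have m3: "m \<le> n - 3" using Suc.prems by arith
    show ?case using Pc_sp(1)[OF P Suc.hyps(1) m3] Suc.IH Suc.prems c[of m] Suc.hyps(1) by simp
  qed
  have df: "w m 3 = 0 \<and> w m 5 = 0" if "1 \<le> m" "m \<le> n - 2" for m
    using that
  proof (induction m rule: nat_induct_at_least)
    case base then show ?case using Pc_bd[OF P] by simp
  next
    case (Suc m)
    have m3: "m \<le> n - 3" using Suc.prems by arith
    show ?case using Pc_sp(2)[OF P Suc.hyps(1) m3] Suc.IH Suc.prems ab[of m] Suc.hyps(1) by simp
  qed
  show ?thesis
  proof (rule ext, rule ext)
    fix m p
    show "w m p = zero_asg m p"
    proof (cases "1 \<le> m \<and> m \<le> n - 2")
      case True
      have e: "w m p = tri (w m 0) (w m 1) (w m 2) (w m 3) (w m 5) p"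
        using Pc_tri[OF P conjunct1[OF True] conjunct2[OF True]] by simp
      then show ?thesis using ab[of m] df[of m] c[of m] True by (simp add: zero_asg_def tri_def)
    next
      case False
      then show ?thesis using Pc_zero[OF P] by (auto simp: zero_asg_def)
    qed
  qed
qed

lemma tri_mono: "a \<le> a' \<Longrightarrow> b \<le> b' \<Longrightarrow> c \<le> c' \<Longrightarrow> d \<le> d' \<Longrightarrow> f \<le> f' \<Longrightarrow>
  tri a b c d f p \<le> tri a' b' c' d' f' p"
  by (simp add: tri_def)

definition le_asg :: "asg \<Rightarrow> asg \<Rightarrow> bool" where
  "le_asg u w \<longleftrightarrow> (\<forall>m p. u m p \<le> w m p)"

lemma exists_strand:
  assumes P: "Pc n w" and n: "n \<ge> 3" and nz: "w \<noteq> zero_asg"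
  shows "\<exists>t \<in> triples n. le_asg (Eg n t) w"
proof -
  obtain i where i: "1 \<le> i" "i \<le> n - 2" "w i 0 + w i 1 > 0" "i = 1 \<or> w (i - 1) 2 > 0"
  proof (cases "w 1 0 + w 1 1 > 0")
    case True show ?thesis by (rule that[of 1]) (use n True in auto)
  next
    case False
    have "\<exists>m. 1 \<le> m \<and> m \<le> n - 2 \<and> w m 2 \<noteq> 0"
      using Pc_allzero[OF P n] False nz by auto
    then obtain m where m: "1 \<le> m" "m \<le> n - 2" "w m 2 > 0" by auto
    have "m \<noteq> n - 2" using m Pc_bd(4)[OF P] by auto
    then have m3: "m \<le> n - 3" using m by arith
    have "w (m+1) 0 + w (m+1) 1 > 0" using Pc_sp(1)[OF P m(1) m3] m by simp
    then show ?thesis using that[of "m+1"] m m3 n by auto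
  qed
  obtain j where j: "i + 1 \<le> j" "j \<le> n - 1" "\<forall>m'. i \<le> m' \<and> m' + 1 < j \<longrightarrow> w m' 0 > 0" "w (j - 1) 1 > 0"
    using J_lem[OF P n i(1,2,3)] by blast
  have j1: "1 \<le> j - 1" "j - 1 \<le> n - 2" "w (j-1) 1 + w (j-1) 3 > 0" using j i by auto
  obtain k where k: "j - 1 + 2 \<le> k" "k \<le> n" "\<forall>m'. j - 1 < m' \<and> m' + 1 < k \<longrightarrow> w m' 3 > 0"
     "k \<le> n - 1 \<longrightarrow> w (k - 1) 5 > 0"
    using K_lem[OF P n j1] by blast
  have t: "(i,j,k) \<in> triples n" using i j k by (auto simp: triples_def)
  have "le_asg (Eg n (i,j,k)) w"
    unfolding le_asg_def
  proof (intro allI)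
    fix m p
    show "Eg n (i, j, k) m p \<le> w m p"
    proof (cases "1 \<le> m \<and> m \<le> n - 2")
      case False then show ?thesis by (simp add: Eg_out)
    next
      case True
      then have wm: "w m p = tri (w m 0) (w m 1) (w m 2) (w m 3) (w m 5) p"
        using Pc_tri[OF P conjunct1[OF True] conjunct2[OF True]] by simp
      have A: "of_bool (i \<le> m \<and> m+2 \<le> j) \<le> w m 0" using j(3) by (auto simp: Suc_le_eq)
      have B: "of_bool (i \<le> m \<and> j = m+1) \<le> w m 1" using j(4) by (auto simp: Suc_le_eq)
      have C: "of_bool (i = m+1) \<le> w m 2" using i(4) True by (auto simp: Suc_le_eq)
      have D: "of_bool (j \<le> m \<and> m+2 \<le> k) \<le> w m 3" using k(3)[rule_format, of m] j(1) i(1) by (auto simp: Suc_le_eq)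
      have F: "of_bool (j \<le> m \<and> k = m+1) \<le> w m 5" using k(4) True by (auto simp: Suc_le_eq)
      show ?thesis unfolding wm using True tri_mono[OF A B C D F, of p] by (simp add: Eg_in)
    qed
  qed
  then show ?thesis using t by blast
qed

definition sz :: "nat \<Rightarrow> asg \<Rightarrow> nat" where
  "sz n w = (\<Sum>m<n. \<Sum>p<9. w m p)"

lemma Eg_j: assumes n: "n \<ge> 3" and t: "(i,j,k) \<in> triples n" shows "Eg n (i,j,k) (j-1) 1 = 1"
proof -
  have "1 \<le> j - 1" "j - 1 \<le> n - 2" "i \<le> j - 1" "j = j - 1 + 1" using t by (auto simp: triples_def)
  then show ?thesis by (simp add: Eg_in)
qed

lemma sz_Eg_pos: assumes n: "n \<ge> 3" and t: "t \<in> triples n" shows "sz n (Eg n t) > 0"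
proof -
  obtain i j k where tt: "t = (i,j,k)" by (cases t)
  have e: "Eg n t (j-1) 1 = 1" using Eg_j[OF n] t tt by simp
  have jn: "j - 1 < n" using t tt by (auto simp: triples_def)
  have "1 \<le> (\<Sum>p<9. Eg n t (j-1) p)" using e member_le_sum[of 1 "{..<9::nat}" "Eg n t (j-1)"] by simp
  also have "\<dots> \<le> (\<Sum>m<n. \<Sum>p<9. Eg n t m p)"
    using member_le_sum[of "j-1" "{..<n}" "\<lambda>m. \<Sum>p<9. Eg n t m p"] jn by simp
  finally show ?thesis by (simp add: sz_def)
qed

lemma decomp:
  assumes n: "n \<ge> 3"
  shows "Pc n w \<Longrightarrow> w \<in> add_closure (Eg n ` triples n)"
proof (induction "sz n w" arbitrary: w rule: less_induct)
  case less
  show ?case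
  proof (cases "w = zero_asg")
    case True then show ?thesis by (simp add: add_closure.zero)
  next
    case False
    obtain t where t: "t \<in> triples n" "le_asg (Eg n t) w"
      using exists_strand[OF less.prems n False] by blast
    let ?u = "sub_asg w (Eg n t)"
    have le: "\<And>m p. Eg n t m p \<le> w m p" using t(2) by (simp add: le_asg_def)
    have Pu: "Pc n ?u" by (rule Pc_sub[OF less.prems Eg_P[OF n t(1)] le])
    have weq: "w = add_asg (Eg n t) ?u"
      using le by (intro ext) (simp add: add_asg_def sub_asg_def)
    have "sz n w = sz n (Eg n t) + sz n ?u"
      by (subst weq) (simp add: sz_def add_asg_def sum.distrib)
    then have "sz n ?u < sz n w" using sz_Eg_pos[OF n t(1)] by simp
    then have "?u \<in> add_closure (Eg n ` triples n)" using less.hyps Pu by blast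
    then have "add_asg (Eg n t) ?u \<in> add_closure (Eg n ` triples n)"
      by (rule add_closure.add[rotated]) (use t in blast)
    then show ?thesis using weq by simp
  qed
qed

lemma closure_P:
  assumes n: "n \<ge> 3" and G: "\<And>g. g \<in> G \<Longrightarrow> Pc n g"
  shows "x \<in> add_closure G \<Longrightarrow> Pc n x"
proof (induction rule: add_closure.induct)
  case zero then show ?case
    by (rule PcI) (simp_all add: zero_asg_def)
next
  case (add g x) then show ?case using G Pc_add by blast
qed



definition li :: "nat \<Rightarrow> nat \<Rightarrow> asg \<Rightarrow> nat" where
  "li n y w = (if y = 1 then w 1 0 + w 1 1 else w (y-1) 2)"
definition lj :: "nat \<Rightarrow> nat \<Rightarrow> asg \<Rightarrow> nat" where
  "lj n y w = w (y-1) 1"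
definition lk :: "nat \<Rightarrow> nat \<Rightarrow> asg \<Rightarrow> nat" where
  "lk n y w = (if y = n then w (n-2) 1 + w (n-2) 3 else w (y-1) 5)"

lemma li_Eg: assumes n: "n \<ge> 3" and t: "(i,j,k) \<in> triples n" shows "li n y (Eg n (i,j,k)) = of_bool (i = y)"
proof -
  have ijk: "1 \<le> i" "i < j" "j < k" "k \<le> n" using t by (auto simp: triples_def)
  show ?thesis
  proof (cases "y = 1")
    case True then show ?thesis using n ijk by (auto simp: li_def Eg_in)
  next
    case False
    show ?thesis
    proof (cases "1 \<le> y - 1 \<and> y - 1 \<le> n - 2")
      case True then show ?thesis using False ijk by (auto simp: li_def Eg_in)
    next
      case c: False then show ?thesis using False ijk by (auto simp: li_def Eg_out)
    qed
  qed
qed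

lemma lj_Eg: assumes n: "n \<ge> 3" and t: "(i,j,k) \<in> triples n" shows "lj n y (Eg n (i,j,k)) = of_bool (j = y)"
proof -
  have ijk: "1 \<le> i" "i < j" "j < k" "k \<le> n" using t by (auto simp: triples_def)
  show ?thesis
  proof (cases "1 \<le> y - 1 \<and> y - 1 \<le> n - 2")
    case True then show ?thesis using ijk by (auto simp: lj_def Eg_in)
  next
    case c: False then show ?thesis using ijk by (auto simp: lj_def Eg_out)
  qed
qed

lemma lk_Eg: assumes n: "n \<ge> 3" and t: "(i,j,k) \<in> triples n" shows "lk n y (Eg n (i,j,k)) = of_bool (k = y)"
proof -
  have ijk: "1 \<le> i" "i < j" "j < k" "k \<le> n" using t by (auto simp: triples_def)
  show ?thesis
  proof (cases "y = n")
    case True then show ?thesis using n ijk by (auto simp: lk_def Eg_in)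
  next
    case False
    show ?thesis
    proof (cases "1 \<le> y - 1 \<and> y - 1 \<le> n - 2")
      case True then show ?thesis using False ijk by (auto simp: lk_def Eg_in)
    next
      case c: False then show ?thesis using False ijk by (auto simp: lk_def Eg_out)
    qed
  qed
qed

lemma li_add: "li n y (add_asg u v) = li n y u + li n y v"
  by (simp add: li_def add_asg_def)
lemma lj_add: "lj n y (add_asg u v) = lj n y u + lj n y v"
  by (simp add: lj_def add_asg_def)
lemma lk_add: "lk n y (add_asg u v) = lk n y u + lk n y v"
  by (simp add: lk_def add_asg_def)
lemma li_mono: "le_asg u v \<Longrightarrow> li n y u \<le> li n y v"
  by (simp add: li_def le_asg_def add_mono)

lemma Eg_irred:
  assumes n: "n \<ge> 3" and t: "t \<in> triples n" and u: "Pc n u" and v: "Pc n v"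
    and uz: "u \<noteq> zero_asg" and vz: "v \<noteq> zero_asg" and eq: "Eg n t = add_asg u v"
  shows False
proof -
  obtain t1 where t1: "t1 \<in> triples n" "le_asg (Eg n t1) u" using exists_strand[OF u n uz] by blast
  obtain t2 where t2: "t2 \<in> triples n" "le_asg (Eg n t2) v" using exists_strand[OF v n vz] by blast
  obtain i j k where tt: "t = (i,j,k)" by (cases t)
  obtain i1 j1 k1 where tt1: "t1 = (i1,j1,k1)" by (cases t1)
  obtain i2 j2 k2 where tt2: "t2 = (i2,j2,k2)" by (cases t2)
  have key: "li n y (Eg n t1) + li n y (Eg n t2) \<le> li n y (Eg n t)" for y
    using li_mono[OF t1(2), of n y] li_mono[OF t2(2), of n y] by (simp add: eq li_add)
  have "of_bool (i1 = i1) + of_bool (i2 = i1) \<le> (of_bool (i = i1) :: nat)"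
    using key[of i1] li_Eg[OF n] t t1 t2 tt tt1 tt2 by simp
  moreover have "of_bool (i1 = i2) + of_bool (i2 = i2) \<le> (of_bool (i = i2) :: nat)"
    using key[of i2] li_Eg[OF n] t t1 t2 tt tt1 tt2 by simp
  ultimately show False by (cases "i = i1"; cases "i = i2"; cases "i1 = i2") auto
qed

lemma Eg_nz: "n \<ge> 3 \<Longrightarrow> t \<in> triples n \<Longrightarrow> Eg n t \<noteq> zero_asg"
  by (cases t) (metis Eg_j zero_asg_def zero_neq_one)

lemma add_zero_asg: "add_asg g zero_asg = g"
  by (simp add: add_asg_def zero_asg_def)

lemma P_eq: "n \<ge> 3 \<Longrightarrow> P_cat n = {w. Pc n w}"
  using P_char by blast

lemma min_gens_eq:
  assumes n: "n \<ge> 3"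
  shows "min_gens (P_cat n) = Eg n ` triples n"
proof
  show "Eg n ` triples n \<subseteq> min_gens (P_cat n)"
  proof
    fix w assume "w \<in> Eg n ` triples n"
    then obtain t where t: "t \<in> triples n" "w = Eg n t" by blast
    show "w \<in> min_gens (P_cat n)"
    proof -
      have irr: "\<not> (\<exists>u\<in>Collect (Pc n). \<exists>v\<in>Collect (Pc n). u \<noteq> zero_asg \<and> v \<noteq> zero_asg \<and> w = add_asg u v)"
        using Eg_irred[OF n t(1)] t(2) by auto
      show ?thesis unfolding min_gens_def P_eq[OF n]
        using Eg_P[OF n t(1)] Eg_nz[OF n t(1)] t(2) irr by simp
    qed
  qed
next
  show "min_gens (P_cat n) \<subseteq> Eg n ` triples n"
  proof
    fix w assume w: "w \<in> min_gens (P_cat n)"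
    then have Pw: "Pc n w" and wz: "w \<noteq> zero_asg"
      and irr: "\<And>u v. Pc n u \<Longrightarrow> Pc n v \<Longrightarrow> u \<noteq> zero_asg \<Longrightarrow> v \<noteq> zero_asg \<Longrightarrow> w \<noteq> add_asg u v"
      unfolding min_gens_def P_eq[OF n] by blast+
    have "w \<in> add_closure (Eg n ` triples n)" by (rule decomp[OF n Pw])
    then show "w \<in> Eg n ` triples n"
    proof (cases rule: add_closure.cases)
      case zero then show ?thesis using wz by simp
    next
      case (add g x)
      have Px: "Pc n x" using closure_P[OF n _ add(3)] Eg_P[OF n] by blast
      have Pg: "Pc n g" "g \<noteq> zero_asg" using add(2) Eg_P[OF n] Eg_nz[OF n] by auto
      show ?thesis
      proof (cases "x = zero_asg")
        case True then show ?thesis using add by (simp add: add_zero_asg)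
      next
        case False then show ?thesis using irr[OF Pg(1) Px Pg(2) False] add(1) by simp
      qed
    qed
  qed
qed



lemma supp_leaf:
  assumes n: "n \<ge> 3"
  shows "Leaf l \<in> supp_asg n w \<longleftrightarrow> (l = 1 \<and> bweight (w 1) 1 \<noteq> (0,0)) \<or>
     (2 \<le> l \<and> l \<le> n - 1 \<and> bweight (w (l-1)) 2 \<noteq> (0,0)) \<or> (l = n \<and> bweight (w (n-2)) 3 \<noteq> (0,0))"
proof
  assume "Leaf l \<in> supp_asg n w"
  then obtain m s where ms: "1 \<le> m" "m \<le> n - 2" "s \<in> {1,2,3}" "side_edge n m s = Leaf l" "bweight (w m) s \<noteq> (0,0)"
    unfolding supp_asg_def by blast
  have "s = 1 \<or> s = 2 \<or> s = 3" using ms(3) by simp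
  then show "(l = 1 \<and> bweight (w 1) 1 \<noteq> (0,0)) \<or>
     (2 \<le> l \<and> l \<le> n - 1 \<and> bweight (w (l-1)) 2 \<noteq> (0,0)) \<or> (l = n \<and> bweight (w (n-2)) 3 \<noteq> (0,0))"
  proof (elim disjE)
    assume s: "s = 1"
    then have "m = 1" "l = 1" using ms(4) by (auto simp: side_edge_def split: if_splits)
    then show ?thesis using ms s by simp
  next
    assume s: "s = 2"
    then have l: "l = m + 1" using ms(4) by (auto simp: side_edge_def split: if_splits)
    then have "2 \<le> l \<and> l \<le> n - 1 \<and> bweight (w (l-1)) 2 \<noteq> (0,0)" using ms s by auto
    then show ?thesis by blast
  next
    assume s: "s = 3"
    then have "m = n - 2" "l = n" using ms(4) by (auto simp: side_edge_def split: if_splits)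
    then show ?thesis using ms s by simp
  qed
next
  assume "(l = 1 \<and> bweight (w 1) 1 \<noteq> (0,0)) \<or>
     (2 \<le> l \<and> l \<le> n - 1 \<and> bweight (w (l-1)) 2 \<noteq> (0,0)) \<or> (l = n \<and> bweight (w (n-2)) 3 \<noteq> (0,0))"
  then show "Leaf l \<in> supp_asg n w"
  proof (elim disjE conjE)
    assume "l = 1" "bweight (w 1) 1 \<noteq> (0,0)"
    note hh = this
    show ?thesis unfolding supp_asg_def
      apply (rule CollectI, rule exI[of _ "1::nat"], rule exI[of _ "1::nat"])
      using hh n by (simp add: side_edge_def)
  next
    assume "2 \<le> l" "l \<le> n - 1" "bweight (w (l-1)) 2 \<noteq> (0,0)"
    note hh = this
    show ?thesis unfolding supp_asg_def
      apply (rule CollectI, rule exI[of _ "l-1::nat"], rule exI[of _ "2::nat"])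
    proof -
      have "1 \<le> l - 1" "l - 1 \<le> n - 2" "l - 1 + 1 = l" using hh n by arith+
      then show "1 \<le> l - 1 \<and> l - 1 \<le> n - 2 \<and> (2::nat) \<in> {1, 2, 3} \<and> side_edge n (l - 1) 2 = Leaf l \<and> bweight (w (l - 1)) 2 \<noteq> (0, 0)"
        using hh by (simp add: side_edge_def)
    qed
  next
    assume "l = n" "bweight (w (n-2)) 3 \<noteq> (0,0)"
    note hh = this
    show ?thesis unfolding supp_asg_def
      apply (rule CollectI, rule exI[of _ "n-2::nat"], rule exI[of _ "3::nat"])
      using hh n by (simp add: side_edge_def)
  qed
qed

lemma supp_spine:
  assumes n: "n \<ge> 3"
  shows "Spine m \<in> supp_asg n w \<longleftrightarrow> 1 \<le> m \<and> m \<le> n - 3 \<and>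
     (bweight (w m) 3 \<noteq> (0,0) \<or> bweight (w (m+1)) 1 \<noteq> (0,0))"
proof
  assume "Spine m \<in> supp_asg n w"
  then obtain m' s where ms: "1 \<le> m'" "m' \<le> n - 2" "s \<in> {1,2,3}" "side_edge n m' s = Spine m" "bweight (w m') s \<noteq> (0,0)"
    unfolding supp_asg_def by blast
  have "s = 1 \<or> s = 2 \<or> s = 3" using ms(3) by simp
  then show "1 \<le> m \<and> m \<le> n - 3 \<and> (bweight (w m) 3 \<noteq> (0,0) \<or> bweight (w (m+1)) 1 \<noteq> (0,0))"
  proof (elim disjE)
    assume s: "s = 1"
    then have "m' \<noteq> 1" "m = m' - 1" using ms(4) by (auto simp: side_edge_def split: if_splits)
    then have mm: "m' = m + 1" "1 \<le> m" "m \<le> n - 3" using ms(1,2) by arith+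
    have "bweight (w (m+1)) 1 \<noteq> (0,0)" using ms(5) s mm(1) by simp
    then show ?thesis using mm by simp
  next
    assume s: "s = 2"
    have "side_edge n m' 2 = Leaf (m'+1)" by (simp add: side_edge_def)
    then show ?thesis using ms(4) s by simp
  next
    assume s: "s = 3"
    then have "m' \<noteq> n - 2" "m = m'" using ms(4) by (auto simp: side_edge_def split: if_splits)
    then have mm: "1 \<le> m" "m \<le> n - 3" using ms(1,2) by arith+
    have "bweight (w m) 3 \<noteq> (0,0)" using ms(5) s \<open>m = m'\<close> by simp
    then show ?thesis using mm by simp
  qed
next
  assume a: "1 \<le> m \<and> m \<le> n - 3 \<and> (bweight (w m) 3 \<noteq> (0,0) \<or> bweight (w (m+1)) 1 \<noteq> (0,0))"
  have m: "1 \<le> m" "m \<le> n - 2" "m \<noteq> n - 2" "1 \<le> m + 1" "m + 1 \<le> n - 2" "m + 1 \<noteq> 1" using a n by arith+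
  have se: "side_edge n m 3 = Spine m" "side_edge n (m+1) 1 = Spine m" using m by (simp_all add: side_edge_def)
  have "bweight (w m) 3 \<noteq> (0,0) \<or> bweight (w (m+1)) 1 \<noteq> (0,0)" using a by blast
  then show "Spine m \<in> supp_asg n w"
  proof
    assume h: "bweight (w m) 3 \<noteq> (0,0)"
    show ?thesis unfolding supp_asg_def
      apply (rule CollectI, rule exI[of _ "m::nat"], rule exI[of _ "3::nat"])
      using h m se by simp
  next
    assume h: "bweight (w (m+1)) 1 \<noteq> (0,0)"
    show ?thesis unfolding supp_asg_def
      apply (rule CollectI, rule exI[of _ "m+1::nat"], rule exI[of _ "1::nat"])
      using h m se by simp
  qed
qed

lemma att_i: "n \<ge> 3 \<Longrightarrow> 1 \<le> i \<Longrightarrow> i \<le> n - 2 \<Longrightarrow> 1 \<le> m \<Longrightarrow> att n i \<le> m \<longleftrightarrow> i \<le> m + 1"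
  by (auto simp: att_def)

lemma att_k: "n \<ge> 3 \<Longrightarrow> 3 \<le> k \<Longrightarrow> k \<le> n \<Longrightarrow> m \<le> n - 3 \<Longrightarrow> m < att n k \<longleftrightarrow> m + 2 \<le> k"
  by (auto simp: att_def)

lemma att_range: "n \<ge> 3 \<Longrightarrow> 1 \<le> att n l \<and> att n l \<le> n - 2"
  by (auto simp: att_def)

lemma supp_Eg:
  assumes n: "n \<ge> 3" and t: "(i,j,k) \<in> triples n"
  shows "supp_asg n (Eg n (i,j,k)) = span_edges n i j k"
proof -
  have ijk: "1 \<le> i" "i < j" "j < k" "k \<le> n" using t by (auto simp: triples_def)
  have leaf: "Leaf l \<in> supp_asg n (Eg n (i,j,k)) \<longleftrightarrow> l = i \<or> l = j \<or> l = k" for l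
  proof -
    consider "l = 1" | "2 \<le> l \<and> l \<le> n - 1" | "l = n" | "l = 0 \<or> l > n" using n by arith
    then show ?thesis
    proof cases
      case 1
      have e: "Eg n (i,j,k) 1 = tri (of_bool (i \<le> 1 \<and> 1+2 \<le> j)) (of_bool (i \<le> 1 \<and> j = 1+1)) (of_bool (i = 1+1))
         (of_bool (j \<le> 1 \<and> 1+2 \<le> k)) (of_bool (j \<le> 1 \<and> k = 1+1))" using n by (intro Eg_in) auto
      show ?thesis unfolding supp_leaf[OF n] e bweight_tri using 1 n ijk by simp linarith
    next
      case 2
      have e: "Eg n (i,j,k) (l-1) = tri (of_bool (i \<le> l-1 \<and> l-1+2 \<le> j)) (of_bool (i \<le> l-1 \<and> j = l-1+1)) (of_bool (i = l-1+1))
         (of_bool (j \<le> l-1 \<and> l-1+2 \<le> k)) (of_bool (j \<le> l-1 \<and> k = l-1+1))" using 2 n by (intro Eg_in) auto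
      have l1: "l - 1 + 1 = l" using 2 by arith
      show ?thesis unfolding supp_leaf[OF n] e bweight_tri l1 using 2 n ijk by simp linarith
    next
      case 3
      have e: "Eg n (i,j,k) (n-2) = tri (of_bool (i \<le> n-2 \<and> n-2+2 \<le> j)) (of_bool (i \<le> n-2 \<and> j = n-2+1)) (of_bool (i = n-2+1))
         (of_bool (j \<le> n-2 \<and> n-2+2 \<le> k)) (of_bool (j \<le> n-2 \<and> k = n-2+1))" using n by (intro Eg_in) auto
      have l1: "n - 2 + 1 = n - 1" "n - 2 + 2 = n" using n by arith+
      show ?thesis unfolding supp_leaf[OF n] e bweight_tri l1 using 3 n ijk by simp linarith
    next
      case 4
      then show ?thesis unfolding supp_leaf[OF n] using n ijk by auto
    qed
  qed
  have spine: "Spine m \<in> supp_asg n (Eg n (i,j,k)) \<longleftrightarrow> att n i \<le> m \<and> m < att n k" for m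
  proof (cases "1 \<le> m \<and> m \<le> n - 3")
    case True
    have e1: "Eg n (i,j,k) m = tri (of_bool (i \<le> m \<and> m+2 \<le> j)) (of_bool (i \<le> m \<and> j = m+1)) (of_bool (i = m+1))
         (of_bool (j \<le> m \<and> m+2 \<le> k)) (of_bool (j \<le> m \<and> k = m+1))" using True by (intro Eg_in) auto
    have "att n i \<le> m \<longleftrightarrow> i \<le> m + 1" using att_i[OF n ijk(1), of m] True ijk by auto
    moreover have "m < att n k \<longleftrightarrow> m + 2 \<le> k" using att_k[OF n _ ijk(4), of m] True ijk by auto
    moreover have e2: "Eg n (i,j,k) (m+1) = tri (of_bool (i \<le> m+1 \<and> m+1+2 \<le> j)) (of_bool (i \<le> m+1 \<and> j = m+1+1)) (of_bool (i = m+1+1))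
         (of_bool (j \<le> m+1 \<and> m+1+2 \<le> k)) (of_bool (j \<le> m+1 \<and> k = m+1+1))" using True by (intro Eg_in) auto
    ultimately show ?thesis unfolding supp_spine[OF n] e1 e2 bweight_tri using True ijk by simp linarith
  next
    case False
    then show ?thesis unfolding supp_spine[OF n] using att_range[OF n, of i] att_range[OF n, of k] by auto
  qed
  show ?thesis
  proof (rule set_eqI)
    fix e show "e \<in> supp_asg n (Eg n (i,j,k)) \<longleftrightarrow> e \<in> span_edges n i j k"
      by (cases e) (auto simp: leaf spine span_edges_def)
  qed
qed



lemma span_leaf: "Leaf l \<in> span_edges n i j k \<longleftrightarrow> l = i \<or> l = j \<or> l = k"
  by (auto simp: span_edges_def)

lemma span_inj:
  assumes "(i,j,k) \<in> triples n" "(i',j',k') \<in> triples n" "span_edges n i j k = span_edges n i' j' k'"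
  shows "(i,j,k) = (i',j',k')"
proof -
  have o: "i < j" "j < k" "i' < j'" "j' < k'" using assms(1,2) by (auto simp: triples_def)
  have "l = i \<or> l = j \<or> l = k \<longleftrightarrow> l = i' \<or> l = j' \<or> l = k'" for l
    using span_leaf[of l n i j k] span_leaf[of l n i' j' k'] assms(3) by simp
  from this[of i] this[of j] this[of k] this[of i'] this[of j'] this[of k'] o show ?thesis
    by auto
qed

lemma wgen_eq:
  assumes n: "n \<ge> 3" and t: "t \<in> triples n"
  shows "wgen n t = Eg n t"
proof -
  obtain i j k where tt: "t = (i,j,k)" by (cases t)
  have "(THE w. w \<in> min_gens (P_cat n) \<and> supp_asg n w = span_edges n i j k) = Eg n (i,j,k)"
  proof (rule the_equality)
    show "Eg n (i,j,k) \<in> min_gens (P_cat n) \<and> supp_asg n (Eg n (i,j,k)) = span_edges n i j k"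
      using min_gens_eq[OF n] t tt supp_Eg[OF n] by auto
  next
    fix w assume w: "w \<in> min_gens (P_cat n) \<and> supp_asg n w = span_edges n i j k"
    then obtain t' where t': "t' \<in> triples n" "w = Eg n t'" using min_gens_eq[OF n] by auto
    obtain i' j' k' where tt': "t' = (i',j',k')" by (cases t')
    have "span_edges n i' j' k' = span_edges n i j k" using w t' tt' supp_Eg[OF n] by auto
    then have "t' = t" using span_inj t t' tt tt' by metis
    then show "w = Eg n (i,j,k)" using t' tt by simp
  qed
  then show ?thesis by (simp add: wgen_def tt)
qed

lemma part1:
  assumes n: "n \<ge> 3" and t: "(i,j,k) \<in> triples n"
  shows "\<exists>!w. w \<in> min_gens (P_cat n) \<and> supp_asg n w = span_edges n i j k"
proof (rule ex1I)
  show "Eg n (i,j,k) \<in> min_gens (P_cat n) \<and> supp_asg n (Eg n (i,j,k)) = span_edges n i j k"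
    using min_gens_eq[OF n] t supp_Eg[OF n t] by auto
next
  fix w assume w: "w \<in> min_gens (P_cat n) \<and> supp_asg n w = span_edges n i j k"
  then obtain t' where t': "t' \<in> triples n" "w = Eg n t'" using min_gens_eq[OF n] by auto
  obtain i' j' k' where tt': "t' = (i',j',k')" by (cases t')
  have "span_edges n i' j' k' = span_edges n i j k" using w t' tt' supp_Eg[OF n] by auto
  then have "t' = (i,j,k)" using span_inj t t' tt' by metis
  then show "w = Eg n (i,j,k)" using t' by simp
qed

lemma wgen_img: "n \<ge> 3 \<Longrightarrow> wgen n ` triples n = Eg n ` triples n"
  using wgen_eq by (auto intro: image_cong)

lemma closure_eq:
  assumes n: "n \<ge> 3"
  shows "add_closure (Eg n ` triples n) = P_cat n"
proof
  have G: "\<And>g. g \<in> Eg n ` triples n \<Longrightarrow> Pc n g" using Eg_P[OF n] by blast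
  show "add_closure (Eg n ` triples n) \<subseteq> P_cat n"
    using closure_P[OF n G] P_eq[OF n] by auto
  show "P_cat n \<subseteq> add_closure (Eg n ` triples n)"
    using decomp[OF n] P_eq[OF n] by auto
qed

lemma part3:
  assumes n: "n \<ge> 3"
  shows "minimal_generating_set (wgen n ` triples n) (P_cat n)"
  unfolding minimal_generating_set_def wgen_img[OF n]
proof (intro conjI allI impI)
  show "Eg n ` triples n \<subseteq> P_cat n" using Eg_P[OF n] P_eq[OF n] by auto
  show "add_closure (Eg n ` triples n) = P_cat n" by (rule closure_eq[OF n])
  fix H assume H: "H \<subset> Eg n ` triples n"
  then obtain t where t: "t \<in> triples n" "Eg n t \<notin> H" by blast
  show "add_closure H \<noteq> P_cat n"
  proof
    assume eq: "add_closure H = P_cat n"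
    have "Eg n t \<in> add_closure H" using eq Eg_P[OF n t(1)] P_eq[OF n] by auto
    then show False
    proof (cases rule: add_closure.cases)
      case zero then show ?thesis using Eg_nz[OF n t(1)] by simp
    next
      case (add g x)
      have gG: "g \<in> Eg n ` triples n" using add(2) H by blast
      have Pg: "Pc n g" "g \<noteq> zero_asg" using gG Eg_P[OF n] Eg_nz[OF n] by auto
      have G: "\<And>g. g \<in> H \<Longrightarrow> Pc n g" using Eg_P[OF n] H by blast
      have Px: "Pc n x" using closure_P[OF n G] add(3) by blast
      show False
      proof (cases "x = zero_asg")
        case True then show False using add t by (simp add: add_zero_asg)
      next
        case False then show False using Eg_irred[OF n t(1) Pg(1) Px Pg(2) False] add(1) by simp
      qed
    qed
  qed
qed



section \<open>Polynomial ring and ideal generalities\<close>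

lemma pr_iff: "p \<in> poly_ring n \<longleftrightarrow> (\<forall>mo \<in> Poly_Mapping.keys p. set_mset mo \<subseteq> triples n)"
  by (simp add: poly_ring_def)

lemma pr_mult: "p \<in> poly_ring n \<Longrightarrow> q \<in> poly_ring n \<Longrightarrow> p * q \<in> poly_ring n"
  unfolding pr_iff using keys_mult[of p q] by fastforce

lemma pr_add: "p \<in> poly_ring n \<Longrightarrow> q \<in> poly_ring n \<Longrightarrow> p + q \<in> poly_ring n"
  unfolding pr_iff using keys_add[of p q] by blast

lemma keys_diff_sub: "Poly_Mapping.keys (p - q) \<subseteq> Poly_Mapping.keys p \<union> Poly_Mapping.keys (q :: cpoly)"
  by (auto simp: in_keys_iff lookup_minus)

lemma pr_diff: "p \<in> poly_ring n \<Longrightarrow> q \<in> poly_ring n \<Longrightarrow> p - q \<in> poly_ring n"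
  unfolding pr_iff using keys_diff_sub[of p q] by blast

lemma pr_single: "set_mset mo \<subseteq> triples n \<Longrightarrow> Poly_Mapping.single mo c \<in> poly_ring n"
  unfolding pr_iff by simp

lemma pr_zero: "0 \<in> poly_ring n"
  unfolding pr_iff by simp

lemma pr_sum: "finite I \<Longrightarrow> (\<And>i. i \<in> I \<Longrightarrow> f i \<in> poly_ring n) \<Longrightarrow> sum f I \<in> poly_ring n"
  by (induction I rule: finite_induct) (auto intro: pr_add pr_zero)

lemma ig_add: "x \<in> ideal_gen A S \<Longrightarrow> y \<in> ideal_gen A S \<Longrightarrow> x + y \<in> ideal_gen A S"
proof (induction x rule: ideal_gen.induct)
  case zero then show ?case by simp
next
  case (add r g x)
  then have "r * g + (x + y) \<in> ideal_gen A S" by (intro ideal_gen.add) auto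
  then show ?case by (simp add: add.assoc)
qed

lemma ig_mult:
  assumes cl: "\<And>r r'. r \<in> A \<Longrightarrow> r' \<in> A \<Longrightarrow> r * r' \<in> A" and r: "r \<in> A"
  shows "x \<in> ideal_gen A S \<Longrightarrow> r * x \<in> ideal_gen A S"
proof (induction x rule: ideal_gen.induct)
  case zero then show ?case by (simp add: ideal_gen.zero)
next
  case (add r' g x)
  have "(r * r') * g + r * x \<in> ideal_gen A S" using add cl[OF r] by (intro ideal_gen.add) auto
  then show ?case by (simp add: distrib_left mult.assoc)
qed

lemma ig_gen: "r \<in> A \<Longrightarrow> g \<in> S \<Longrightarrow> r * g \<in> ideal_gen A S"
  using ideal_gen.add[OF _ _ ideal_gen.zero, of r A g S] by simp

lemma ig_sum: "finite I \<Longrightarrow> (\<And>i. i \<in> I \<Longrightarrow> f i \<in> ideal_gen A S) \<Longrightarrow> sum f I \<in> ideal_gen A S"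
  by (induction I rule: finite_induct) (auto intro: ig_add ideal_gen.zero)

lemma J_mult: "r \<in> poly_ring n \<Longrightarrow> x \<in> J_ideal n \<Longrightarrow> r * x \<in> J_ideal n"
  unfolding J_ideal_def by (rule ig_mult[OF pr_mult])

lemma J_add: "x \<in> J_ideal n \<Longrightarrow> y \<in> J_ideal n \<Longrightarrow> x + y \<in> J_ideal n"
  unfolding J_ideal_def by (rule ig_add)

lemma J_sum: "finite I \<Longrightarrow> (\<And>i. i \<in> I \<Longrightarrow> f i \<in> J_ideal n) \<Longrightarrow> sum f I \<in> J_ideal n"
  unfolding J_ideal_def by (rule ig_sum)

lemma J_sub_pr: "x \<in> J_ideal n \<Longrightarrow> x \<in> poly_ring n"
  unfolding J_ideal_def
proof (induction x rule: ideal_gen.induct)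
  case zero then show ?case by (rule pr_zero)
next
  case (add r g x)
  then obtain a b where g: "g = Var a * Var b - Var (meet3 a b) * Var (join3 a b)" "a \<in> triples n" "b \<in> triples n"
    by blast
  have mj: "meet3 a b \<in> triples n" "join3 a b \<in> triples n" using g(2,3)
    by (cases a; cases b; auto simp: triples_def)+
  have "g \<in> poly_ring n" unfolding g(1) Var_def
    using g mj by (intro pr_diff pr_mult pr_single; simp)
  then show ?case using add by (intro pr_add pr_mult)
qed

definition phi :: "nat \<Rightarrow> asg \<Rightarrow> cpoly \<Rightarrow> complex" where
  "phi n u p = (\<Sum>mo \<in> {mo \<in> Poly_Mapping.keys p. mono_img n mo = u}. Poly_Mapping.lookup p mo)"

lemma I_cat_iff: "p \<in> I_cat n \<longleftrightarrow> p \<in> poly_ring n \<and> (\<forall>u. phi n u p = 0)"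
  by (simp add: I_cat_def phi_def)

lemma phi_super:
  assumes S: "finite S" "Poly_Mapping.keys p \<subseteq> S"
  shows "phi n u p = (\<Sum>mo\<in>S. if mono_img n mo = u then Poly_Mapping.lookup p mo else 0)"
proof -
  have "phi n u p = (\<Sum>mo\<in>Poly_Mapping.keys p. if mono_img n mo = u then Poly_Mapping.lookup p mo else 0)"
    unfolding phi_def by (rule sum.inter_filter) simp
  also have "\<dots> = (\<Sum>mo\<in>S. if mono_img n mo = u then Poly_Mapping.lookup p mo else 0)"
    by (rule sum.mono_neutral_left) (use S in \<open>auto simp: in_keys_iff\<close>)
  finally show ?thesis .
qed

lemma phi_add: "phi n u (p + q) = phi n u p + phi n u q"
proof -
  let ?S = "Poly_Mapping.keys p \<union> Poly_Mapping.keys q"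
  have f: "finite ?S" by simp
  have "phi n u (p + q) = (\<Sum>mo\<in>?S. if mono_img n mo = u then Poly_Mapping.lookup (p + q) mo else 0)"
    by (rule phi_super[OF f keys_add])
  also have "\<dots> = (\<Sum>mo\<in>?S. (if mono_img n mo = u then Poly_Mapping.lookup p mo else 0) +
                               (if mono_img n mo = u then Poly_Mapping.lookup q mo else 0))"
    by (rule sum.cong) (auto simp: lookup_add)
  also have "\<dots> = phi n u p + phi n u q"
    by (simp add: sum.distrib phi_super[OF f, of p] phi_super[OF f, of q])
  finally show ?thesis .
qed

lemma phi_diff: "phi n u (p - q) = phi n u p - phi n u q"
proof -
  let ?S = "Poly_Mapping.keys p \<union> Poly_Mapping.keys q"
  have f: "finite ?S" by simp
  have "phi n u (p - q) = (\<Sum>mo\<in>?S. if mono_img n mo = u then Poly_Mapping.lookup (p - q) mo else 0)"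
    by (rule phi_super[OF f keys_diff_sub])
  also have "\<dots> = (\<Sum>mo\<in>?S. (if mono_img n mo = u then Poly_Mapping.lookup p mo else 0) -
                               (if mono_img n mo = u then Poly_Mapping.lookup q mo else 0))"
    by (rule sum.cong) (auto simp: lookup_minus)
  also have "\<dots> = phi n u p - phi n u q"
    by (simp add: sum_subtractf phi_super[OF f, of p] phi_super[OF f, of q])
  finally show ?thesis .
qed

lemma phi_zero: "phi n u 0 = 0"
  by (simp add: phi_def)

lemma phi_sum: "finite I \<Longrightarrow> phi n u (sum f I) = (\<Sum>i\<in>I. phi n u (f i))"
  by (induction I rule: finite_induct) (auto simp: phi_zero phi_add)

lemma phi_single: "phi n u (Poly_Mapping.single mo c) = (if mono_img n mo = u then c else 0)"
proof -
  have "phi n u (Poly_Mapping.single mo c) = (\<Sum>mo'\<in>{mo}. if mono_img n mo' = u then Poly_Mapping.lookup (Poly_Mapping.single mo c) mo' else 0)"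
    by (rule phi_super) auto
  then show ?thesis by simp
qed

lemma poly_expand: "p = (\<Sum>mo\<in>Poly_Mapping.keys p. Poly_Mapping.single mo (Poly_Mapping.lookup p mo))"
proof (rule poly_mapping_eqI)
  fix x
  have "Poly_Mapping.lookup (\<Sum>mo\<in>Poly_Mapping.keys p. Poly_Mapping.single mo (Poly_Mapping.lookup p mo)) x
     = (\<Sum>mo\<in>Poly_Mapping.keys p. if mo = x then Poly_Mapping.lookup p mo else 0)"
    by (simp add: lookup_sum lookup_single when_def)
  also have "\<dots> = Poly_Mapping.lookup p x"
    by (simp add: in_keys_iff)
  finally show "Poly_Mapping.lookup p x = Poly_Mapping.lookup (\<Sum>mo\<in>Poly_Mapping.keys p. Poly_Mapping.single mo (Poly_Mapping.lookup p mo)) x" by simp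
qed



lemma bA: fixes i j i' j' m :: nat shows "i < j \<Longrightarrow> i' < j' \<Longrightarrow> (of_bool (i \<le> m \<and> m+2 \<le> j) + of_bool (i' \<le> m \<and> m+2 \<le> j') :: nat)
   = of_bool (min i i' \<le> m \<and> m+2 \<le> min j j') + of_bool (max i i' \<le> m \<and> m+2 \<le> max j j')"
  unfolding of_bool_def min_def max_def by auto
lemma bB: fixes i j i' j' m :: nat shows "i < j \<Longrightarrow> i' < j' \<Longrightarrow> (of_bool (i \<le> m \<and> j = m+1) + of_bool (i' \<le> m \<and> j' = m+1) :: nat)
   = of_bool (min i i' \<le> m \<and> min j j' = m+1) + of_bool (max i i' \<le> m \<and> max j j' = m+1)"
  unfolding of_bool_def min_def max_def by auto
lemma bC: fixes i i' m :: nat shows "(of_bool (i = m+1) + of_bool (i' = m+1) :: nat)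
   = of_bool (min i i' = m+1) + of_bool (max i i' = m+1)"
  unfolding of_bool_def min_def max_def by auto

lemma tri_add: "tri a b c d f p + tri a' b' c' d' f' p = tri (a+a') (b+b') (c+c') (d+d') (f+f') p"
  by (simp add: tri_def)

lemma Eg_lattice:
  assumes n: "n \<ge> 3" and a: "a \<in> triples n" and b: "b \<in> triples n"
  shows "Eg n a m p + Eg n b m p = Eg n (meet3 a b) m p + Eg n (join3 a b) m p"
proof -
  obtain i j k where aa: "a = (i,j,k)" by (cases a)
  obtain i' j' k' where bb: "b = (i',j',k')" by (cases b)
  have o: "i < j" "j < k" "i' < j'" "j' < k'" using a b aa bb by (auto simp: triples_def)
  show ?thesis
  proof (cases "1 \<le> m \<and> m \<le> n - 2")
    case False then show ?thesis by (simp add: Eg_out)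
  next
    case True
    note E = Eg_in[OF conjunct1[OF True] conjunct2[OF True]]
    have "Eg n a m p + Eg n b m p = tri (of_bool (i \<le> m \<and> m+2 \<le> j) + of_bool (i' \<le> m \<and> m+2 \<le> j'))
       (of_bool (i \<le> m \<and> j = m+1) + of_bool (i' \<le> m \<and> j' = m+1)) (of_bool (i = m+1) + of_bool (i' = m+1))
       (of_bool (j \<le> m \<and> m+2 \<le> k) + of_bool (j' \<le> m \<and> m+2 \<le> k')) (of_bool (j \<le> m \<and> k = m+1) + of_bool (j' \<le> m \<and> k' = m+1)) p"
      by (simp only: aa bb E tri_add)
    also have "\<dots> = tri (of_bool (min i i' \<le> m \<and> m+2 \<le> min j j') + of_bool (max i i' \<le> m \<and> m+2 \<le> max j j'))
       (of_bool (min i i' \<le> m \<and> min j j' = m+1) + of_bool (max i i' \<le> m \<and> max j j' = m+1))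
       (of_bool (min i i' = m+1) + of_bool (max i i' = m+1))
       (of_bool (min j j' \<le> m \<and> m+2 \<le> min k k') + of_bool (max j j' \<le> m \<and> m+2 \<le> max k k'))
       (of_bool (min j j' \<le> m \<and> min k k' = m+1) + of_bool (max j j' \<le> m \<and> max k k' = m+1)) p"
      by (simp only: bA[OF o(1,3), of m] bB[OF o(1,3), of m] bC[of i m i'] bA[OF o(2,4), of m] bB[OF o(2,4), of m])
    also have "\<dots> = Eg n (meet3 a b) m p + Eg n (join3 a b) m p"
      by (simp only: aa bb meet3.simps join3.simps E tri_add)
    finally show ?thesis .
  qed
qed

lemma meet_join_T:
  assumes "a \<in> triples n" "b \<in> triples n"
  shows "meet3 a b \<in> triples n" "join3 a b \<in> triples n"
  using assms by (cases a; cases b; auto simp: triples_def)+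

lemma mono_img_add: "mono_img n (A + B) = add_asg (mono_img n A) (mono_img n B)"
  by (simp add: mono_img_def add_asg_def)

lemma mono_img_Eg: "n \<ge> 3 \<Longrightarrow> set_mset mo \<subseteq> triples n \<Longrightarrow> mono_img n mo = (\<lambda>m p. \<Sum>t\<in>#mo. Eg n t m p)"
  unfolding mono_img_def
  by (intro ext arg_cong[where f = sum_mset] image_mset_cong) (auto simp: wgen_eq)

lemma mono_img_pair:
  assumes n: "n \<ge> 3" and a: "a \<in> triples n" and b: "b \<in> triples n"
  shows "mono_img n {#a, b#} = mono_img n {#meet3 a b, join3 a b#}"
proof -
  have "mono_img n {#a, b#} = (\<lambda>m p. Eg n a m p + Eg n b m p)"
    using mono_img_Eg[OF n, of "{#a,b#}"] a b by simp
  also have "\<dots> = (\<lambda>m p. Eg n (meet3 a b) m p + Eg n (join3 a b) m p)"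
    using Eg_lattice[OF n a b] by simp
  also have "\<dots> = mono_img n {#meet3 a b, join3 a b#}"
    using mono_img_Eg[OF n, of "{#meet3 a b, join3 a b#}"] meet_join_T[OF a b] by simp
  finally show ?thesis .
qed



definition le3 :: "nat \<times> nat \<times> nat \<Rightarrow> nat \<times> nat \<times> nat \<Rightarrow> bool" where
  "le3 a b \<longleftrightarrow> fst a \<le> fst b \<and> fst (snd a) \<le> fst (snd b) \<and> snd (snd a) \<le> snd (snd b)"
definition is_chain :: "(nat \<times> nat \<times> nat) multiset \<Rightarrow> bool" where
  "is_chain c \<longleftrightarrow> (\<forall>a\<in>#c. \<forall>b\<in>#c. le3 a b \<or> le3 b a)"
definition ssum :: "nat \<times> nat \<times> nat \<Rightarrow> nat" where
  "ssum t = fst t + fst (snd t) + snd (snd t)"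
definition Phi :: "(nat \<times> nat \<times> nat) multiset \<Rightarrow> nat" where
  "Phi mo = sum_mset (image_mset (\<lambda>t. (ssum t)^2) mo)"
definition X :: "(nat \<times> nat \<times> nat) multiset \<Rightarrow> cpoly" where
  "X mo = Poly_Mapping.single mo 1"

lemma meet_facts:
  assumes "\<not> le3 a b" "\<not> le3 b a"
  shows "ssum (meet3 a b) < ssum a" "ssum (meet3 a b) < ssum b" "ssum (meet3 a b) + ssum (join3 a b) = ssum a + ssum b"
  using assms by (cases a; cases b; auto simp: le3_def ssum_def min_def max_def)+

lemma sq_ineq:
  fixes x y p q :: nat
  assumes "x + y = p + q" "x < p" "x < q"
  shows "p^2 + q^2 < x^2 + y^2"
proof -
  obtain d1 where d1: "p = x + d1" "d1 > 0" using assms(2) by (metis add_diff_inverse_nat less_imp_not_less zero_less_diff)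
  obtain d2 where d2: "q = x + d2" "d2 > 0" using assms(3) by (metis add_diff_inverse_nat less_imp_not_less zero_less_diff)
  have y: "y = x + d1 + d2" using assms(1) d1 d2 by simp
  have "0 < d1 * d2" using d1 d2 by simp
  then show ?thesis unfolding d1(1) d2(1) y by (simp add: power2_eq_square algebra_simps)
qed

lemma Phi_add_mset: "Phi (add_mset a M) = (ssum a)^2 + Phi M"
  by (simp add: Phi_def)

lemma Phi_bound: "set_mset mo \<subseteq> triples n \<Longrightarrow> Phi mo \<le> size mo * (9*n*n)"
proof (induction mo)
  case empty then show ?case by (simp add: Phi_def)
next
  case (add a M)
  obtain i j k where a: "a = (i,j,k)" by (cases a)
  have "i \<le> n" "j \<le> n" "k \<le> n" using add.prems a by (auto simp: triples_def)
  then have "ssum a \<le> 3 * n" by (simp add: ssum_def a)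
  then have "(ssum a)^2 \<le> (3*n)^2" by (rule power_mono) simp
  then have "(ssum a)^2 \<le> 9*n*n" by (simp add: power2_eq_square)
  then show ?case using add by (simp add: Phi_add_mset)
qed

lemma X_swap:
  assumes n: "n \<ge> 3" and a: "a \<in> triples n" and b: "b \<in> triples n" and r: "set_mset rest \<subseteq> triples n"
  shows "X (add_mset a (add_mset b rest)) - X (add_mset (meet3 a b) (add_mset (join3 a b) rest)) \<in> J_ideal n"
proof -
  have e1: "X (add_mset a (add_mset b rest)) = X rest * (Var a * Var b)"
    by (simp add: X_def Var_def mult_single add_mset_commute)
  have e2: "X (add_mset (meet3 a b) (add_mset (join3 a b) rest)) = X rest * (Var (meet3 a b) * Var (join3 a b))"
    by (simp add: X_def Var_def mult_single add_mset_commute)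
  have g: "Var a * Var b - Var (meet3 a b) * Var (join3 a b) \<in>
     {Var a * Var b - Var (meet3 a b) * Var (join3 a b) | a b. a \<in> triples n \<and> b \<in> triples n}"
    using a b by blast
  have "X rest \<in> poly_ring n" unfolding X_def by (rule pr_single[OF r])
  then have "X rest * (Var a * Var b - Var (meet3 a b) * Var (join3 a b)) \<in> J_ideal n"
    unfolding J_ideal_def by (rule ig_gen[OF _ g])
  then show ?thesis by (simp add: e1 e2 right_diff_distrib)
qed

lemma reduce:
  assumes n: "n \<ge> 3"
  shows "set_mset mo \<subseteq> triples n \<Longrightarrow> \<exists>c. is_chain c \<and> set_mset c \<subseteq> triples n \<and> mono_img n c = mono_img n mo
            \<and> X mo - X c \<in> J_ideal n"
proof (induction "size mo * (9*n*n) - Phi mo" arbitrary: mo rule: less_induct)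
  case less
  show ?case
  proof (cases "is_chain mo")
    case True
    then show ?thesis using less.prems by (intro exI[of _ mo]) (simp add: J_ideal_def ideal_gen.zero)
  next
    case False
    then obtain a b where ab: "a \<in># mo" "b \<in># mo" "\<not> le3 a b" "\<not> le3 b a"
      unfolding is_chain_def by blast
    have "a \<noteq> b" using ab(3) by (auto simp: le3_def)
    then have "b \<in># mo - {#a#}" using ab(2) by (simp add: in_diff_count)
    define rest where "rest = mo - {#a#} - {#b#}"
    have e1: "add_mset a (mo - {#a#}) = mo" by (rule insert_DiffM[OF ab(1)])
    have e2: "add_mset b (mo - {#a#} - {#b#}) = mo - {#a#}" by (rule insert_DiffM[OF \<open>b \<in># mo - {#a#}\<close>])
    have mo: "mo = add_mset a (add_mset b rest)"
      unfolding rest_def by (subst e2) (rule e1[symmetric])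
    have aT: "a \<in> triples n" "b \<in> triples n" "set_mset rest \<subseteq> triples n" using less.prems mo by auto
    define mo' where "mo' = add_mset (meet3 a b) (add_mset (join3 a b) rest)"
    have T': "set_mset mo' \<subseteq> triples n" using aT meet_join_T[OF aT(1,2)] by (simp add: mo'_def)
    have sz: "size mo' = size mo" by (simp add: mo mo'_def)
    have "Phi mo < Phi mo'"
      using sq_ineq[OF meet_facts(3)[OF ab(3,4)] meet_facts(1,2)[OF ab(3,4)]]
      by (simp add: mo mo'_def Phi_add_mset)
    moreover have "Phi mo' \<le> size mo' * (9*n*n)" by (rule Phi_bound[OF T'])
    ultimately have lt0: "size mo * (9*n*n) - Phi mo' < size mo * (9*n*n) - Phi mo" using sz
      by (intro diff_less_mono2) auto
    have lt: "size mo' * (9*n*n) - Phi mo' < size mo * (9*n*n) - Phi mo" using lt0 sz by simp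
    obtain c where c: "is_chain c" "set_mset c \<subseteq> triples n" "mono_img n c = mono_img n mo'" "X mo' - X c \<in> J_ideal n"
      using less.hyps[OF lt T'] by blast
    have im: "mono_img n mo' = mono_img n mo"
    proof -
      have q1: "add_mset a (add_mset b rest) = {#a, b#} + rest" by simp
      have "mono_img n mo = add_asg (mono_img n {#a, b#}) (mono_img n rest)"
        unfolding mo q1 by (rule mono_img_add)
      also have "\<dots> = add_asg (mono_img n {#meet3 a b, join3 a b#}) (mono_img n rest)"
        by (simp add: mono_img_pair[OF n aT(1,2)])
      also have "\<dots> = mono_img n mo'"
      proof -
        have q2: "add_mset (meet3 a b) (add_mset (join3 a b) rest) = {#meet3 a b, join3 a b#} + rest" by simp
        show ?thesis unfolding mo'_def q2 by (rule mono_img_add[symmetric])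
      qed
      finally show ?thesis by simp
    qed
    have "X mo - X mo' \<in> J_ideal n" unfolding mo mo'_def by (rule X_swap[OF n aT])
    then have "(X mo - X mo') + (X mo' - X c) \<in> J_ideal n" using c(4) by (rule J_add)
    then have "X mo - X c \<in> J_ideal n" by simp
    then show ?thesis using c im by auto
  qed
qed

lemma mono_img_single: "n \<ge> 3 \<Longrightarrow> t \<in> triples n \<Longrightarrow> mono_img n {#t#} = Eg n t"
  by (simp add: mono_img_def wgen_eq)

lemma mono_img_addm: "n \<ge> 3 \<Longrightarrow> t \<in> triples n \<Longrightarrow> mono_img n (add_mset t c) = add_asg (Eg n t) (mono_img n c)"
proof -
  assume a: "n \<ge> 3" "t \<in> triples n"
  have "add_mset t c = {#t#} + c" by simp
  then show ?thesis using mono_img_add[of n "{#t#}" c] mono_img_single[OF a] by simp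
qed

lemma count_coords:
  assumes n: "n \<ge> 3"
  shows "set_mset c \<subseteq> triples n \<Longrightarrow> count (image_mset fst c) y = li n y (mono_img n c)
     \<and> count (image_mset (fst \<circ> snd) c) y = lj n y (mono_img n c)
     \<and> count (image_mset (snd \<circ> snd) c) y = lk n y (mono_img n c)"
proof (induction c)
  case empty then show ?case by (simp add: mono_img_def li_def lj_def lk_def)
next
  case (add t c)
  obtain i j k where tt: "t = (i,j,k)" by (cases t)
  have tT: "t \<in> triples n" using add.prems by simp
  have e: "mono_img n (add_mset t c) = add_asg (Eg n t) (mono_img n c)" by (rule mono_img_addm[OF n tT])
  have IH: "count (image_mset fst c) y = li n y (mono_img n c)"
     "count (image_mset (fst \<circ> snd) c) y = lj n y (mono_img n c)"
     "count (image_mset (snd \<circ> snd) c) y = lk n y (mono_img n c)" using add by (simp_all add: comp_def)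
  show ?case unfolding e li_add lj_add lk_add using IH tT
    by (simp add: tt li_Eg[OF n] lj_Eg[OF n] lk_Eg[OF n] comp_def)
qed

lemma img_coords:
  assumes n: "n \<ge> 3" and c1: "set_mset c1 \<subseteq> triples n" and c2: "set_mset c2 \<subseteq> triples n"
    and eq: "mono_img n c1 = mono_img n c2"
  shows "image_mset fst c1 = image_mset fst c2" "image_mset (fst \<circ> snd) c1 = image_mset (fst \<circ> snd) c2"
        "image_mset (snd \<circ> snd) c1 = image_mset (snd \<circ> snd) c2"
  using count_coords[OF n c1] count_coords[OF n c2] eq by (auto intro!: multiset_eqI)

lemma le3_refl: "le3 t t" by (simp add: le3_def)

lemma le3_eq: "le3 t x \<Longrightarrow> ssum x \<le> ssum t \<Longrightarrow> x = t"
  by (cases t; cases x) (auto simp: le3_def ssum_def)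

lemma le3_ssum: "le3 t x \<Longrightarrow> ssum t \<le> ssum x"
  by (cases t; cases x) (auto simp: le3_def ssum_def)

lemma chain_top:
  assumes ch: "is_chain c" and ne: "c \<noteq> {#}"
  shows "\<exists>t\<in>#c. \<forall>x\<in>#c. le3 x t"
proof -
  let ?M = "Max (ssum ` set_mset c)"
  have fin: "finite (ssum ` set_mset c)" "ssum ` set_mset c \<noteq> {}" using ne by auto
  obtain t where t: "t \<in># c" "ssum t = ?M" using Max_in[OF fin] by auto
  have "le3 x t" if x: "x \<in># c" for x
  proof -
    have "le3 x t \<or> le3 t x" using ch x t(1) unfolding is_chain_def by blast
    moreover have "ssum x \<le> ssum t" using t(2) Max_ge[OF fin(1)] x by simp
    ultimately show ?thesis using le3_eq le3_refl by metis
  qed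
  then show ?thesis using t(1) by blast
qed

lemma chain_sub: "is_chain c \<Longrightarrow> is_chain (c - d)"
  unfolding is_chain_def by (meson in_diffD)

lemma chain_eq:
  "is_chain c1 \<Longrightarrow> is_chain c2 \<Longrightarrow> image_mset fst c1 = image_mset fst c2 \<Longrightarrow>
   image_mset (fst \<circ> snd) c1 = image_mset (fst \<circ> snd) c2 \<Longrightarrow>
   image_mset (snd \<circ> snd) c1 = image_mset (snd \<circ> snd) c2 \<Longrightarrow> c1 = c2"
proof (induction "size c1" arbitrary: c1 c2 rule: less_induct)
  case less
  show ?case
  proof (cases "c1 = {#}")
    case True then show ?thesis using less.prems(3) by simp
  next
    case False
    then have ne2: "c2 \<noteq> {#}" using less.prems(3) by auto
    obtain t1 where t1: "t1 \<in># c1" "\<forall>x\<in>#c1. le3 x t1" using chain_top[OF less.prems(1) False] by blast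
    obtain t2 where t2: "t2 \<in># c2" "\<forall>x\<in>#c2. le3 x t2" using chain_top[OF less.prems(2) ne2] by blast
    have co: "f t1 \<le> f t2" "f t2 \<le> f t1"
      if f: "image_mset f c1 = image_mset f c2" and m: "\<And>x y. le3 x y \<Longrightarrow> f x \<le> f y" for f :: "nat \<times> nat \<times> nat \<Rightarrow> nat"
    proof -
      have "f t1 \<in># image_mset f c2" using t1(1) f by (metis image_eqI set_image_mset)
      then obtain x where "x \<in># c2" "f x = f t1" by auto
      then show "f t1 \<le> f t2" using t2(2) m by metis
      have "f t2 \<in># image_mset f c1" using t2(1) f by (metis image_eqI set_image_mset)
      then obtain y where "y \<in># c1" "f y = f t2" by auto
      then show "f t2 \<le> f t1" using t1(2) m by metis
    qed
    have "fst t1 = fst t2" using co[of fst] less.prems(3) by (force simp: le3_def)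
    moreover have "fst (snd t1) = fst (snd t2)" using co[of "fst \<circ> snd"] less.prems(4) by (force simp: le3_def)
    moreover have "snd (snd t1) = snd (snd t2)" using co[of "snd \<circ> snd"] less.prems(5) by (force simp: le3_def)
    ultimately have tt: "t1 = t2" by (simp add: prod_eq_iff)
    have s1: "{#t1#} \<subseteq># c1" "{#t1#} \<subseteq># c2" using t1 t2 tt by auto
    have "c1 - {#t1#} = c2 - {#t1#}"
    proof (rule less.hyps)
      have "0 < size c1" using False by (cases c1) auto
      then show "size (c1 - {#t1#}) < size c1" by (simp add: size_Diff_submset[OF s1(1)])
      show "is_chain (c1 - {#t1#})" "is_chain (c2 - {#t1#})" using less.prems by (auto intro: chain_sub)
      show "image_mset fst (c1 - {#t1#}) = image_mset fst (c2 - {#t1#})"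
        "image_mset (fst \<circ> snd) (c1 - {#t1#}) = image_mset (fst \<circ> snd) (c2 - {#t1#})"
        "image_mset (snd \<circ> snd) (c1 - {#t1#}) = image_mset (snd \<circ> snd) (c2 - {#t1#})"
        using less.prems by (simp_all add: image_mset_Diff[OF s1(1)] image_mset_Diff[OF s1(2)])
    qed
    then show ?thesis using t1(1) t2(1) tt by (metis insert_DiffM)
  qed
qed

lemma chain_inj:
  assumes n: "n \<ge> 3" and "is_chain c1" "is_chain c2" "set_mset c1 \<subseteq> triples n" "set_mset c2 \<subseteq> triples n"
    "mono_img n c1 = mono_img n c2"
  shows "c1 = c2"
  using chain_eq[OF assms(2,3) img_coords[OF n assms(4,5,6)]] .



lemma J_sub_I:
  assumes n: "n \<ge> 3"
  shows "x \<in> J_ideal n \<Longrightarrow> x \<in> I_cat n"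
proof -
  assume xJ: "x \<in> J_ideal n"
  have xR: "x \<in> poly_ring n" by (rule J_sub_pr[OF xJ])
  have "phi n u x = 0" for u
    using xJ unfolding J_ideal_def
  proof (induction x rule: ideal_gen.induct)
    case zero then show ?case by (simp add: phi_zero)
  next
    case (add r g x)
    obtain a b where g: "g = Var a * Var b - Var (meet3 a b) * Var (join3 a b)" "a \<in> triples n" "b \<in> triples n"
      using add(2) by blast
    have g2: "g = Poly_Mapping.single {#a, b#} 1 - Poly_Mapping.single {#meet3 a b, join3 a b#} 1"
    proof -
      have c: "{#x#} + {#y#} = {#x, y#}" for x y :: "nat \<times> nat \<times> nat"
        by (metis add_mset_add_single add.commute)
      show ?thesis unfolding g(1) Var_def mult_single c by simp
    qed
    have pair: "mono_img n {#a, b#} = mono_img n {#meet3 a b, join3 a b#}" by (rule mono_img_pair[OF n g(2,3)])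
    have term0: "phi n u (Poly_Mapping.single mo c * g) = 0" for mo c
    proof -
      have "Poly_Mapping.single mo c * g = Poly_Mapping.single (mo + {#a, b#}) c - Poly_Mapping.single (mo + {#meet3 a b, join3 a b#}) c"
        by (simp add: g2 right_diff_distrib mult_single)
      moreover have "mono_img n (mo + {#a, b#}) = mono_img n (mo + {#meet3 a b, join3 a b#})"
        by (simp only: mono_img_add pair)
      ultimately show ?thesis by (simp add: phi_diff phi_single)
    qed
    have "r * g = (\<Sum>mo\<in>Poly_Mapping.keys r. Poly_Mapping.single mo (Poly_Mapping.lookup r mo) * g)"
      by (subst poly_expand[of r]) (simp add: sum_distrib_right)
    then have "phi n u (r * g) = 0" by (simp add: phi_sum term0)
    then show ?case using add(4) by (simp add: phi_add)
  qed
  then show ?thesis using xR by (simp add: I_cat_iff)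
qed

lemma I_sub_J:
  assumes n: "n \<ge> 3" and pI: "p \<in> I_cat n"
  shows "p \<in> J_ideal n"
proof -
  have pR: "p \<in> poly_ring n" and ph: "\<And>u. phi n u p = 0" using pI by (auto simp: I_cat_iff)
  let ?K = "Poly_Mapping.keys p"
  have KT: "set_mset mo \<subseteq> triples n" if "mo \<in> ?K" for mo using pR that by (simp add: pr_iff)
  define ch where "ch mo = (SOME c. is_chain c \<and> set_mset c \<subseteq> triples n \<and> mono_img n c = mono_img n mo
            \<and> X mo - X c \<in> J_ideal n)" for mo
  have chP: "is_chain (ch mo) \<and> set_mset (ch mo) \<subseteq> triples n \<and> mono_img n (ch mo) = mono_img n mo
            \<and> X mo - X (ch mo) \<in> J_ideal n" if "mo \<in> ?K" for mo
    unfolding ch_def by (rule someI_ex[OF reduce[OF n KT[OF that]]])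
  define q where "q = (\<Sum>mo\<in>?K. Poly_Mapping.single (ch mo) (Poly_Mapping.lookup p mo))"
  have "p - q = (\<Sum>mo\<in>?K. Poly_Mapping.single mo (Poly_Mapping.lookup p mo) - Poly_Mapping.single (ch mo) (Poly_Mapping.lookup p mo))"
    unfolding q_def by (subst (1) poly_expand[of p]) (simp add: sum_subtractf)
  also have "\<dots> = (\<Sum>mo\<in>?K. Poly_Mapping.single {#} (Poly_Mapping.lookup p mo) * (X mo - X (ch mo)))"
    by (rule sum.cong) (simp_all add: X_def right_diff_distrib mult_single)
  also have "\<dots> \<in> J_ideal n"
  proof (rule J_sum)
    fix mo assume mo: "mo \<in> ?K"
    show "Poly_Mapping.single {#} (Poly_Mapping.lookup p mo) * (X mo - X (ch mo)) \<in> J_ideal n"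
      by (rule J_mult) (simp_all add: pr_single chP[OF mo])
  qed simp
  finally have pq: "p - q \<in> J_ideal n" .
  have q0: "q = 0"
  proof (rule poly_mapping_eqI)
    fix x
    have lq: "Poly_Mapping.lookup q x = (\<Sum>mo\<in>{mo \<in> ?K. ch mo = x}. Poly_Mapping.lookup p mo)"
      unfolding q_def by (simp add: lookup_sum lookup_single when_def sum.inter_filter)
    show "Poly_Mapping.lookup q x = Poly_Mapping.lookup 0 x"
    proof (cases "\<exists>mo0\<in>?K. ch mo0 = x")
      case False
      then have emp: "{mo \<in> ?K. ch mo = x} = {}" by auto
      show ?thesis unfolding lq emp by simp
    next
      case True
      then obtain mo0 where mo0: "mo0 \<in> ?K" "ch mo0 = x" by blast
      have "{mo \<in> ?K. ch mo = x} = {mo \<in> ?K. mono_img n mo = mono_img n x}"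
      proof (rule Collect_cong, rule conj_cong[OF refl])
        fix mo assume mo: "mo \<in> ?K"
        show "ch mo = x \<longleftrightarrow> mono_img n mo = mono_img n x"
        proof
          assume "ch mo = x" then show "mono_img n mo = mono_img n x" using chP[OF mo] by simp
        next
          assume e: "mono_img n mo = mono_img n x"
          have "mono_img n (ch mo) = mono_img n (ch mo0)" using chP[OF mo] chP[OF mo0(1)] mo0(2) e by simp
          then have "ch mo = ch mo0" using chain_inj[OF n] chP[OF mo] chP[OF mo0(1)] by blast
          then show "ch mo = x" using mo0(2) by simp
        qed
      qed
      then have "Poly_Mapping.lookup q x = phi n (mono_img n x) p" using lq by (simp add: phi_def)
      then show ?thesis using ph by simp
    qed
  qed
  show ?thesis using pq q0 by simp
qed

theorem mainTheorem6:
  fixes n :: nat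
  assumes "n \<ge> 3"
  shows "(\<forall>i j k. (i,j,k) \<in> triples n \<longrightarrow>
            (\<exists>!w. w \<in> min_gens (P_cat n) \<and> supp_asg n w = span_edges n i j k))
       \<and> min_gens (P_cat n) = wgen n ` triples n
       \<and> minimal_generating_set (wgen n ` triples n) (P_cat n)
       \<and> I_cat n = J_ideal n"
proof (intro conjI allI impI)
  fix i j k assume "(i,j,k) \<in> triples n"
  then show "\<exists>!w. w \<in> min_gens (P_cat n) \<and> supp_asg n w = span_edges n i j k" by (rule part1[OF assms])
next
  show "min_gens (P_cat n) = wgen n ` triples n" using min_gens_eq[OF assms] wgen_img[OF assms] by simp
next
  show "minimal_generating_set (wgen n ` triples n) (P_cat n)" by (rule part3[OF assms])
next
  show "I_cat n = J_ideal n" using I_sub_J[OF assms] J_sub_I[OF assms] by blast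
qed


end
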